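(* Let $k$ be a field of characteristic zero, $a\in k[h]$ a non-constant polynomial, $h_0\in k\setminus\{0\}$, $\sigma\in\mathrm{Aut}_k(k[h])$ given by $\sigma(h)=h-h_0$, and $A=A(k[h],a,\sigma)$ the generalized Weyl algebra. Let $r\geq 1$ and let $w\in k$ be a primitive $r$-th root of unity, and let $G=\mathbb{Z}/r\mathbb{Z}$ act on $A$ by powers of the automorphism $\theta_w$ of $A$ determined by $\theta_w(x)=wx$, $\theta_w(y)=w^{-1}y$, $\theta_w(h)=h$. Then the subalgebra of invariants $A^G$ is isomorphic to the generalized Weyl algebra $A(k[H],\tilde a,\tau)$, where $\tau\in\mathrm{Aut}_k(k[H])$ is given by $\tau(H)=H-h_0$ and \[\tilde a(H)=\sigma^{-r+1}(a)(rH)\cdots\sigma^{-1}(a)(rH)\,a(rH),\] i.e. $\tilde a(H)=\prod_{i=0}^{r-1}(\sigma^{-i}(a))(rH)$, where $(\sigma^{-i}(a))(rH)$ denotes the polynomial $\sigma^{-i}(a)\in k[h]$ evaluated at $h=rH$. (Under the isomorphism, $H$ corresponds to $h/r$, and the generators $X,Y$ of the generalized Weyl algebra correspond to $x^r,y^r$.)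
   Context: For a $k$-algebra $R$, a central element $a\in R$ and $\sigma\in\mathrm{Aut}_k(R)$, the generalized Weyl algebra $A(R,a,\sigma)$ is the $k$-algebra generated by $R$ and two new variables $x,y$ subject to the relations $yx=a$, $xy=\sigma(a)$, $xr=\sigma(r)x$ and $ry=y\sigma(r)$ for all $r\in R$. *)

theory Defs
  imports "HOL-Computational_Algebra.Polynomial" "HOL-Algebra.QuotRing"
begin

text \<open>Generalized Weyl algebra A(k[h], a, sigma) with sigma(h) = h - h0, constructed as
  the free associative k-algebra on the letters h, x, y modulo the two-sided ideal
  generated by the defining relations (k[h] is free commutative on h, so the algebra
  generated by k[h] and x, y is a quotient of the free algebra k<h,x,y>).\<close>

datatype gwa_letter = Lh | Lx | Ly

text \<open>Free associative k-algebra k<h,x,y>: finitely supported functions on words,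
  multiplication = k-bilinear extension of concatenation of words.\<close>
definition free_alg :: "(gwa_letter list \<Rightarrow> 'k::field) ring" where
  "free_alg =
    \<lparr> carrier = {f. finite {u. f u \<noteq> 0}},
      mult = (\<lambda>f g u. \<Sum>i\<le>length u. f (take i u) * g (drop i u)),
      one = (\<lambda>u. if u = [] then 1 else 0),
      zero = (\<lambda>u. 0),
      add = (\<lambda>f g u. f u + g u) \<rparr>"

definition fa_word :: "gwa_letter list \<Rightarrow> gwa_letter list \<Rightarrow> 'k::field" where
  "fa_word v = (\<lambda>u. if u = v then 1 else 0)"

definition fa_poly :: "'k::field poly \<Rightarrow> gwa_letter list \<Rightarrow> 'k" where
  "fa_poly p = (\<lambda>u. if u = replicate (length u) Lh then coeff p (length u) else 0)"

definition gwa_sigma :: "'k::field \<Rightarrow> 'k poly \<Rightarrow> 'k poly" where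
  "gwa_sigma h0 p = pcompose p [:- h0, 1:]"

definition gwa_rels :: "'k::field poly \<Rightarrow> 'k \<Rightarrow> (gwa_letter list \<Rightarrow> 'k) set" where
  "gwa_rels a h0 =
     { fa_word [Ly] \<otimes>\<^bsub>free_alg\<^esub> fa_word [Lx] \<ominus>\<^bsub>free_alg\<^esub> fa_poly a,
       fa_word [Lx] \<otimes>\<^bsub>free_alg\<^esub> fa_word [Ly] \<ominus>\<^bsub>free_alg\<^esub> fa_poly (gwa_sigma h0 a) }
   \<union> (\<Union>r. { fa_word [Lx] \<otimes>\<^bsub>free_alg\<^esub> fa_poly r
               \<ominus>\<^bsub>free_alg\<^esub> fa_poly (gwa_sigma h0 r) \<otimes>\<^bsub>free_alg\<^esub> fa_word [Lx],
             fa_poly r \<otimes>\<^bsub>free_alg\<^esub> fa_word [Ly]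
               \<ominus>\<^bsub>free_alg\<^esub> fa_word [Ly] \<otimes>\<^bsub>free_alg\<^esub> fa_poly (gwa_sigma h0 r) })"

definition gwa_ideal :: "'k::field poly \<Rightarrow> 'k \<Rightarrow> (gwa_letter list \<Rightarrow> 'k) set" where
  "gwa_ideal a h0 = genideal free_alg (gwa_rels a h0)"

definition gwa :: "'k::field poly \<Rightarrow> 'k \<Rightarrow> (gwa_letter list \<Rightarrow> 'k) set ring" where
  "gwa a h0 = free_alg Quot gwa_ideal a h0"

definition gwa_class :: "'k::field poly \<Rightarrow> 'k \<Rightarrow> (gwa_letter list \<Rightarrow> 'k) \<Rightarrow> (gwa_letter list \<Rightarrow> 'k) set" where
  "gwa_class a h0 f = gwa_ideal a h0 +>\<^bsub>free_alg\<^esub> f"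

definition gwa_scalar :: "'k::field poly \<Rightarrow> 'k \<Rightarrow> 'k \<Rightarrow> (gwa_letter list \<Rightarrow> 'k) set" where
  "gwa_scalar a h0 c = gwa_class a h0 (fa_poly [:c:])"

text \<open>Lift to k<h,x,y> of theta_w: the algebra endomorphism with h \<mapsto> h, x \<mapsto> w x,
  y \<mapsto> w^-1 y; on a word u it multiplies by w^(#x in u) * (w^-1)^(#y in u).\<close>
definition theta_free :: "'k::field \<Rightarrow> (gwa_letter list \<Rightarrow> 'k) \<Rightarrow> (gwa_letter list \<Rightarrow> 'k)" where
  "theta_free w f = (\<lambda>u. w ^ count_list u Lx * inverse w ^ count_list u Ly * f u)"

definition gwa_theta :: "'k::field poly \<Rightarrow> 'k \<Rightarrow> 'k \<Rightarrow> (gwa_letter list \<Rightarrow> 'k) set \<Rightarrow> (gwa_letter list \<Rightarrow> 'k) set" where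
  "gwa_theta a h0 w C = gwa_class a h0 (theta_free w (SOME f. f \<in> C))"

definition gwa_invariants :: "'k::field poly \<Rightarrow> 'k \<Rightarrow> 'k \<Rightarrow> nat \<Rightarrow> (gwa_letter list \<Rightarrow> 'k) set set" where
  "gwa_invariants a h0 w r =
     {C \<in> carrier (gwa a h0). \<forall>j<r. (gwa_theta a h0 w ^^ j) C = C}"

definition gwa_inv_alg :: "'k::field poly \<Rightarrow> 'k \<Rightarrow> 'k \<Rightarrow> nat \<Rightarrow> (gwa_letter list \<Rightarrow> 'k) set ring" where
  "gwa_inv_alg a h0 w r = (gwa a h0) \<lparr> carrier := gwa_invariants a h0 w r \<rparr>"

definition kalg_iso ::
  "('a, 'c) ring_scheme \<Rightarrow> ('k \<Rightarrow> 'a) \<Rightarrow> ('b, 'd) ring_scheme \<Rightarrow> ('k \<Rightarrow> 'b) \<Rightarrow> ('a \<Rightarrow> 'b) set" where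
  "kalg_iso A \<iota>A B \<iota>B = {\<phi>. \<phi> \<in> ring_iso A B \<and> (\<forall>c. \<phi> (\<iota>A c) = \<iota>B c)}"

definition prim_root :: "nat \<Rightarrow> 'k::field \<Rightarrow> bool" where
  "prim_root r w \<longleftrightarrow> w ^ r = 1 \<and> (\<forall>j. 0 < j \<and> j < r \<longrightarrow> w ^ j \<noteq> 1)"

end

theory Submission
  imports Defs
begin

definition splits :: "'a list \<Rightarrow> ('a list \<times> 'a list) set" where
  "splits u = {(p,q). p @ q = u}"

lemma splits_eq: "splits u = (\<lambda>i. (take i u, drop i u)) ` {..length u}"
  unfolding splits_def
  apply (auto simp: image_iff)
  subgoal for a b by (rule bexI[of _ "length a"]) auto
  done

lemma finite_splits[simp]: "finite (splits u)"
  by (simp add: splits_eq)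

lemma sum_splits: "(\<Sum>i\<le>length u. F (take i u) (drop i u)) = (\<Sum>(p,q)\<in>splits u. F p q)"
proof -
  have "inj_on (\<lambda>i. (take i u, drop i u)) {..length u}"
    by (auto simp: inj_on_def) (metis length_take min.absorb2)
  then show ?thesis unfolding splits_eq by (simp add: sum.reindex)
qed

lemma fa_mult: "(f \<otimes>\<^bsub>free_alg\<^esub> g) u = (\<Sum>(p,q)\<in>splits u. f p * g q)"
  unfolding free_alg_def using sum_splits[where u=u and F="\<lambda>p q. f p * g q"] by simp

lemma fa_simps[simp]:
  "carrier free_alg = {f. finite {u. f u \<noteq> 0}}"
  "(f \<oplus>\<^bsub>free_alg\<^esub> g) = (\<lambda>u. f u + g u)"
  "\<one>\<^bsub>free_alg\<^esub> = (\<lambda>u. if u = [] then 1 else 0)"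
  "\<zero>\<^bsub>free_alg\<^esub> = (\<lambda>u. 0)"
  by (simp_all add: free_alg_def)

lemma splits_Nil[simp]: "splits [] = {([],[])}"
  by (auto simp: splits_def)

lemma sum_splits_left1:
  "(\<Sum>(p,q)\<in>splits u. (if p = [] then 1 else 0) * (g q::'k::field)) = g u"
proof -
  have "(\<Sum>(p,q)\<in>splits u. (if p = [] then 1 else 0) * g q) = (\<Sum>x\<in>splits u. if x = ([],u) then g u else 0)"
    by (rule sum.cong) (auto simp: splits_def split: if_splits)
  also have "\<dots> = g u" by (subst sum.delta) (auto simp: splits_def[symmetric], auto simp: splits_def)
  finally show ?thesis .
qed

lemma sum_splits_right1:
  "(\<Sum>(p,q)\<in>splits u. (f p::'k::field) * (if q = [] then 1 else 0)) = f u"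
proof -
  have "(\<Sum>(p,q)\<in>splits u. f p * (if q = [] then 1 else 0)) = (\<Sum>x\<in>splits u. if x = (u,[]) then f u else 0)"
    by (rule sum.cong) (auto simp: splits_def split: if_splits)
  also have "\<dots> = f u" by (subst sum.delta) (auto simp: splits_def[symmetric], auto simp: splits_def)
  finally show ?thesis .
qed

lemma supp_mult_subset:
  "{u. (f \<otimes>\<^bsub>free_alg\<^esub> g) u \<noteq> 0} \<subseteq> (\<lambda>(p,q). p @ q) ` ({u. f u \<noteq> 0} \<times> {u. g u \<noteq> 0})"
proof
  fix u assume "u \<in> {u. (f \<otimes>\<^bsub>free_alg\<^esub> g) u \<noteq> 0}"
  then have "(\<Sum>(p,q)\<in>splits u. f p * g q) \<noteq> 0" by (simp add: fa_mult)
  then obtain p q where "(p,q) \<in> splits u" "f p * g q \<noteq> 0"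
    by (metis (mono_tags, lifting) case_prod_conv sum.neutral surj_pair)
  then show "u \<in> (\<lambda>(p,q). p @ q) ` ({u. f u \<noteq> 0} \<times> {u. g u \<noteq> 0})"
    by (auto simp: splits_def image_iff)
qed

lemma fa_mult_closed:
  assumes "f \<in> carrier (free_alg::(gwa_letter list \<Rightarrow> 'k::field) ring)" "g \<in> carrier (free_alg::(gwa_letter list \<Rightarrow> 'k::field) ring)"
  shows "f \<otimes>\<^bsub>free_alg\<^esub> g \<in> carrier (free_alg::(gwa_letter list \<Rightarrow> 'k::field) ring)"
  using assms by simp (rule finite_subset[OF supp_mult_subset], auto)

definition splits3 :: "'a list \<Rightarrow> ('a list \<times> 'a list \<times> 'a list) set" where
  "splits3 u = {(p,q,r). p @ q @ r = u}"

lemma assoc_left: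
  "(\<Sum>(pq,r)\<in>splits u. (\<Sum>(p,q)\<in>splits pq. F p q r)) = (\<Sum>(p,q,r)\<in>splits3 u. F p q r)"
proof -
  have "(\<Sum>(pq,r)\<in>splits u. (\<Sum>(p,q)\<in>splits pq. F p q r)) =
        (\<Sum>(x,y)\<in>Sigma (splits u) (\<lambda>x. splits (fst x)). F (fst y) (snd y) (snd x))"
    by (subst sum.Sigma[symmetric]) (auto simp: split_def)
  also have "\<dots> = (\<Sum>(p,q,r)\<in>splits3 u. F p q r)"
    by (rule sum.reindex_bij_witness[where i = "\<lambda>(p,q,r). ((p@q, r), (p,q))"
          and j = "\<lambda>((pq,r),(p,q)). (p,q,r)"]) (auto simp: splits_def splits3_def)
  finally show ?thesis .
qed

lemma assoc_right:
  "(\<Sum>(p,qr)\<in>splits u. (\<Sum>(q,r)\<in>splits qr. F p q r)) = (\<Sum>(p,q,r)\<in>splits3 u. F p q r)"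
proof -
  have "(\<Sum>(p,qr)\<in>splits u. (\<Sum>(q,r)\<in>splits qr. F p q r)) =
        (\<Sum>(x,y)\<in>Sigma (splits u) (\<lambda>x. splits (snd x)). F (fst x) (fst y) (snd y))"
    by (subst sum.Sigma[symmetric]) (auto simp: split_def)
  also have "\<dots> = (\<Sum>(p,q,r)\<in>splits3 u. F p q r)"
    by (rule sum.reindex_bij_witness[where i = "\<lambda>(p,q,r). ((p, q@r), (q,r))"
          and j = "\<lambda>((p,qr),(q,r)). (p,q,r)"]) (auto simp: splits_def splits3_def)
  finally show ?thesis .
qed

lemma fa_assoc:
  "(f \<otimes>\<^bsub>free_alg\<^esub> g) \<otimes>\<^bsub>free_alg\<^esub> h = f \<otimes>\<^bsub>free_alg\<^esub> (g \<otimes>\<^bsub>free_alg\<^esub> (h::gwa_letter list \<Rightarrow> 'k::field))"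
proof
  fix u
  have "((f \<otimes>\<^bsub>free_alg\<^esub> g) \<otimes>\<^bsub>free_alg\<^esub> h) u = (\<Sum>(pq,r)\<in>splits u. (\<Sum>(p,q)\<in>splits pq. f p * g q * h r))"
    by (simp add: fa_mult sum_distrib_right case_prod_beta)
  also have "\<dots> = (\<Sum>(p,q,r)\<in>splits3 u. f p * g q * h r)" by (rule assoc_left)
  also have "\<dots> = (\<Sum>(p,qr)\<in>splits u. (\<Sum>(q,r)\<in>splits qr. f p * g q * h r))" by (rule assoc_right[symmetric])
  also have "\<dots> = (f \<otimes>\<^bsub>free_alg\<^esub> (g \<otimes>\<^bsub>free_alg\<^esub> h)) u"
    by (simp add: fa_mult sum_distrib_left case_prod_beta mult.assoc)
  finally show "((f \<otimes>\<^bsub>free_alg\<^esub> g) \<otimes>\<^bsub>free_alg\<^esub> h) u = (f \<otimes>\<^bsub>free_alg\<^esub> (g \<otimes>\<^bsub>free_alg\<^esub> h)) u" .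
qed

lemma ring_free_alg: "ring (free_alg :: (gwa_letter list \<Rightarrow> 'k::field) ring)"
proof (rule ringI)
  show "abelian_group (free_alg :: (gwa_letter list \<Rightarrow> 'k::field) ring)"
  proof (rule abelian_groupI)
    fix x y :: "gwa_letter list \<Rightarrow> 'k"
    assume "x \<in> carrier free_alg" "y \<in> carrier free_alg"
    then show "x \<oplus>\<^bsub>free_alg\<^esub> y \<in> carrier free_alg"
      by simp (rule finite_subset[of _ "{u. x u \<noteq> 0} \<union> {u. y u \<noteq> 0}"], auto)
  next
    fix x :: "gwa_letter list \<Rightarrow> 'k"
    assume "x \<in> carrier free_alg"
    then show "\<exists>y\<in>carrier free_alg. y \<oplus>\<^bsub>free_alg\<^esub> x = \<zero>\<^bsub>free_alg\<^esub>"
      by (intro bexI[of _ "\<lambda>u. - x u"]) auto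
  qed (auto simp: add.assoc add.commute)
  show "monoid (free_alg :: (gwa_letter list \<Rightarrow> 'k::field) ring)"
  proof (rule monoidI)
    show "\<one>\<^bsub>free_alg\<^esub> \<in> carrier (free_alg :: (gwa_letter list \<Rightarrow> 'k::field) ring)"
      by simp
  next
    fix x :: "gwa_letter list \<Rightarrow> 'k"
    show "\<one>\<^bsub>free_alg\<^esub> \<otimes>\<^bsub>free_alg\<^esub> x = x"
      by (rule ext) (simp add: fa_mult case_prod_beta sum_splits_left1[unfolded case_prod_beta])
    show "x \<otimes>\<^bsub>free_alg\<^esub> \<one>\<^bsub>free_alg\<^esub> = x"
      by (rule ext) (simp add: fa_mult case_prod_beta sum_splits_right1[unfolded case_prod_beta])
  qed (auto simp: fa_mult_closed[simplified] fa_assoc)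
next
  fix x y z :: "gwa_letter list \<Rightarrow> 'k"
  show "(x \<oplus>\<^bsub>free_alg\<^esub> y) \<otimes>\<^bsub>free_alg\<^esub> z = x \<otimes>\<^bsub>free_alg\<^esub> z \<oplus>\<^bsub>free_alg\<^esub> y \<otimes>\<^bsub>free_alg\<^esub> z"
    by (rule ext) (simp add: fa_mult case_prod_beta sum.distrib algebra_simps)
  show "z \<otimes>\<^bsub>free_alg\<^esub> (x \<oplus>\<^bsub>free_alg\<^esub> y) = z \<otimes>\<^bsub>free_alg\<^esub> x \<oplus>\<^bsub>free_alg\<^esub> z \<otimes>\<^bsub>free_alg\<^esub> y"
    by (rule ext) (simp add: fa_mult case_prod_beta sum.distrib algebra_simps)
qed

lemma fa_carrier_iff: "f \<in> carrier free_alg \<longleftrightarrow> finite {u. f u \<noteq> 0}"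
  by simp

definition sc :: "'k::field \<Rightarrow> (gwa_letter list \<Rightarrow> 'k) \<Rightarrow> (gwa_letter list \<Rightarrow> 'k)" where
  "sc c f = (\<lambda>u. c * f u)"

lemma sc_carrier: "f \<in> carrier free_alg \<Longrightarrow> sc c f \<in> carrier free_alg"
  unfolding sc_def by simp

lemma fa_word_carrier[simp]: "fa_word u \<in> carrier free_alg"
  unfolding fa_word_def by simp

lemma fa_word_mult: "fa_word u \<otimes>\<^bsub>free_alg\<^esub> fa_word v = (fa_word (u @ v) :: _ \<Rightarrow> 'k::field)"
proof
  fix z
  have "(\<Sum>(p,q)\<in>splits z. fa_word u p * fa_word v q) = (\<Sum>x\<in>splits z. if x = (u,v) then (1::'k) else 0)"
    by (rule sum.cong) (auto simp: fa_word_def split: if_splits)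
  also have "\<dots> = fa_word (u @ v) z"
    by (subst sum.delta) (auto simp: splits_def[symmetric], auto simp: splits_def fa_word_def)
  finally show "(fa_word u \<otimes>\<^bsub>free_alg\<^esub> fa_word v) z = (fa_word (u @ v) :: _ \<Rightarrow> 'k) z"
    by (simp add: fa_mult)
qed

lemma fa_mult_sum_left:
  assumes "finite S"
  shows "(\<lambda>u. \<Sum>z\<in>S. c z * F z u) \<otimes>\<^bsub>free_alg\<^esub> g = (\<lambda>u. \<Sum>z\<in>S. c z * (F z \<otimes>\<^bsub>free_alg\<^esub> (g::_\<Rightarrow>'k::field)) u)"
proof
  fix u
  show "((\<lambda>u. \<Sum>z\<in>S. c z * F z u) \<otimes>\<^bsub>free_alg\<^esub> g) u = (\<Sum>z\<in>S. c z * (F z \<otimes>\<^bsub>free_alg\<^esub> g) u)"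
    unfolding fa_mult by (simp add: case_prod_beta sum_distrib_left sum_distrib_right mult.assoc sum.swap[of _ S])
qed

lemma fa_mult_sum_right:
  assumes "finite S"
  shows "g \<otimes>\<^bsub>free_alg\<^esub> (\<lambda>u. \<Sum>z\<in>S. c z * F z u) = (\<lambda>u. \<Sum>z\<in>S. c z * ((g::_\<Rightarrow>'k::field) \<otimes>\<^bsub>free_alg\<^esub> F z) u)"
proof
  fix u
  show "(g \<otimes>\<^bsub>free_alg\<^esub> (\<lambda>u. \<Sum>z\<in>S. c z * F z u)) u = (\<Sum>z\<in>S. c z * (g \<otimes>\<^bsub>free_alg\<^esub> F z) u)"
    unfolding fa_mult by (simp add: case_prod_beta sum_distrib_left sum_distrib_right mult.assoc mult.left_commute sum.swap[of _ S])
qed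

definition lc :: "'z set \<Rightarrow> ('z \<Rightarrow> 'k::field) \<Rightarrow> ('z \<Rightarrow> gwa_letter list) \<Rightarrow> gwa_letter list \<Rightarrow> 'k" where
  "lc S c w = (\<lambda>u. \<Sum>z\<in>S. c z * fa_word (w z) u)"

lemma lc_mult_right:
  "finite S \<Longrightarrow> lc S c w \<otimes>\<^bsub>free_alg\<^esub> fa_word v = lc S c (\<lambda>z. w z @ v)"
  unfolding lc_def by (simp add: fa_mult_sum_left fa_word_mult)

lemma fa_poly_lc: "fa_poly p = lc {..degree p} (coeff p) (\<lambda>j. replicate j Lh)"
proof
  fix u
  have "(\<Sum>z\<le>degree p. coeff p z * fa_word (replicate z Lh) u) =
        (\<Sum>z\<le>degree p. if z = length u then (if u = replicate (length u) Lh then coeff p z else 0) else 0)"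
    by (rule sum.cong) (auto simp: fa_word_def)
  also have "\<dots> = fa_poly p u"
    by (auto simp: fa_poly_def coeff_eq_0)
  finally show "fa_poly p u = lc {..degree p} (coeff p) (\<lambda>j. replicate j Lh) u"
    by (simp add: lc_def)
qed

lemma lc_char:
  assumes "finite S" "inj_on w S"
  shows "lc S c w u = (if u \<in> w ` S then c (the_inv_into S w u) else 0)"
proof (cases "u \<in> w ` S")
  case True
  then obtain z where z: "z \<in> S" "u = w z" by auto
  have "lc S c w u = (\<Sum>z'\<in>S. if z' = z then c z else 0)"
    unfolding lc_def by (rule sum.cong) (use z assms in \<open>auto simp: fa_word_def inj_on_def\<close>)
  also have "\<dots> = c z" using z assms by simp
  finally show ?thesis using z assms by (simp add: the_inv_into_f_f)
next
  case False
  then show ?thesis unfolding lc_def by (auto intro!: sum.neutral simp: fa_word_def)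
qed

lemma lc_carrier: "finite S \<Longrightarrow> lc S c w \<in> carrier free_alg"
proof -
  assume S: "finite S"
  have "{u. lc S c w u \<noteq> 0} \<subseteq> w ` S"
  proof
    fix u assume "u \<in> {u. lc S c w u \<noteq> 0}"
    then obtain z where "z \<in> S" "c z * fa_word (w z) u \<noteq> 0"
      unfolding lc_def using sum.not_neutral_contains_not_neutral by force
    then show "u \<in> w ` S" by (auto simp: fa_word_def split: if_splits)
  qed
  then show ?thesis using S by (simp add: finite_subset)
qed

definition bw :: "nat \<times> int \<Rightarrow> gwa_letter list" where
  "bw z = replicate (fst z) Lh @ (if snd z \<ge> 0 then replicate (nat (snd z)) Lx else replicate (nat (- snd z)) Ly)"

lemma count_list_replicate: "count_list (replicate n x) y = (if x = y then n else 0)"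
  by (induction n) auto

lemma count_bw:
  "count_list (bw (i,n)) Lh = i"
  "count_list (bw (i,n)) Lx = (if n \<ge> 0 then nat n else 0)"
  "count_list (bw (i,n)) Ly = (if n \<ge> 0 then 0 else nat (-n))"
  by (auto simp: bw_def count_list_replicate)

lemma inj_bw: "inj bw"
proof (rule injI)
  fix z z' assume eq: "bw z = bw z'"
  obtain i n where z: "z = (i,n)" by fastforce
  obtain i' n' where z': "z' = (i',n')" by fastforce
  have "i = i'" using count_bw(1)[of i n] count_bw(1)[of i' n'] eq z z' by simp
  moreover have "n = n'"
    using count_bw(2)[of i n] count_bw(2)[of i' n'] count_bw(3)[of i n] count_bw(3)[of i' n'] eq z z'
    by (auto split: if_splits)
  ultimately show "z = z'" using z z' by simp
qed

definition nfK :: "(nat \<times> int \<Rightarrow> 'k::field) \<Rightarrow> gwa_letter list \<Rightarrow> 'k" where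
  "nfK K = (\<lambda>u. if u \<in> range bw then K (inv_into UNIV bw u) else 0)"

lemma nfK_bw[simp]: "nfK K (bw z) = K z"
  by (simp add: nfK_def inj_bw)

lemma nfK_add: "nfK K1 \<oplus>\<^bsub>free_alg\<^esub> nfK K2 = nfK (\<lambda>z. K1 z + K2 z)"
  by (auto simp: nfK_def)

lemma nfK_sc: "sc c (nfK K) = nfK (\<lambda>z. c * K z)"
  by (auto simp: nfK_def sc_def)

lemma nfK_carrier: "finite {z. K z \<noteq> 0} \<Longrightarrow> nfK K \<in> carrier free_alg"
proof -
  assume S: "finite {z. K z \<noteq> 0}"
  have "{u. nfK K u \<noteq> 0} \<subseteq> bw ` {z. K z \<noteq> 0}"
  proof
    fix u assume "u \<in> {u. nfK K u \<noteq> 0}"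
    then have "u \<in> range bw" "K (inv_into UNIV bw u) \<noteq> 0" by (auto simp: nfK_def split: if_splits)
    moreover have "u = bw (inv_into UNIV bw u)" using \<open>u \<in> range bw\<close> by (simp add: f_inv_into_f)
    ultimately show "u \<in> bw ` {z. K z \<noteq> 0}" by blast
  qed
  then show ?thesis using S by (simp add: finite_subset)
qed

lemma lc_bw_nfK:
  assumes "finite S"
  shows "lc S c bw = nfK (\<lambda>z. if z \<in> S then c z else 0)"
proof
  fix u
  show "lc S c bw u = nfK (\<lambda>z. if z \<in> S then c z else 0) u"
  proof (cases "u \<in> range bw")
    case True
    then obtain z where z: "u = bw z" by auto
    have iz: "inv_into UNIV bw u = z" using z inj_bw by simp
    show ?thesis
      using inj_bw by (auto simp: lc_char[OF assms] nfK_def z iz the_inv_into_f_f inj_on_subset inj_eq)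
  next
    case False
    then show ?thesis using inj_bw by (auto simp: lc_char[OF assms] nfK_def inj_on_subset)
  qed
qed

lemma fa_poly_mult_word:
  "fa_poly p \<otimes>\<^bsub>free_alg\<^esub> fa_word (bw (0,n)) = nfK (\<lambda>z. if snd z = n then coeff p (fst z) else 0)"
proof -
  have "fa_poly p \<otimes>\<^bsub>free_alg\<^esub> fa_word (bw (0,n)) = lc {..degree p} (coeff p) (\<lambda>j. bw (j,n))"
    unfolding fa_poly_lc by (simp add: lc_mult_right bw_def)
  also have "\<dots> = lc ((\<lambda>j. (j,n)) ` {..degree p}) (\<lambda>z. coeff p (fst z)) bw"
    unfolding lc_def by (subst sum.reindex) (auto simp: inj_on_def)
  also have "\<dots> = nfK (\<lambda>z. if snd z = n then coeff p (fst z) else 0)"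
    apply (subst lc_bw_nfK, simp)
    apply (rule arg_cong[where f=nfK], rule ext)
    subgoal for z by (cases z) (auto simp: image_iff coeff_eq_0)
    done
  finally show ?thesis .
qed

lemma fa_poly_char: "fa_poly p u = (if set u \<subseteq> {Lh} then coeff p (length u) else 0)"
proof -
  have "u = replicate (length u) Lh \<longleftrightarrow> set u \<subseteq> {Lh}"
  proof
    assume "u = replicate (length u) Lh"
    then show "set u \<subseteq> {Lh}" by (metis set_replicate_Suc set_replicate_conv_if empty_subsetI subset_refl)
  next
    assume "set u \<subseteq> {Lh}"
    then show "u = replicate (length u) Lh" by (intro replicate_length_same[symmetric]) auto
  qed
  then show ?thesis unfolding fa_poly_def by simp
qed

lemma fa_poly_carrier[simp]: "fa_poly p \<in> carrier free_alg"
  unfolding fa_poly_lc by (rule lc_carrier) simp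

lemma fa_poly_add: "fa_poly (p + q) = fa_poly p \<oplus>\<^bsub>free_alg\<^esub> fa_poly q"
  by (auto simp: fa_poly_def)

lemma fa_mult_idx: "(f \<otimes>\<^bsub>free_alg\<^esub> g) u = (\<Sum>i\<le>length u. f (take i u) * g (drop i u))"
  unfolding free_alg_def by simp

lemma fa_poly_mult: "fa_poly p \<otimes>\<^bsub>free_alg\<^esub> fa_poly q = fa_poly (p * q)"
proof
  fix u
  show "(fa_poly p \<otimes>\<^bsub>free_alg\<^esub> fa_poly q) u = fa_poly (p * q) u"
  proof (cases "set u \<subseteq> {Lh}")
    case True
    have st: "set (take i u) \<subseteq> {Lh}" "set (drop i u) \<subseteq> {Lh}" for i
      using subset_trans[OF set_take_subset[of i u] True] subset_trans[OF set_drop_subset[of i u] True] by auto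
    have "(\<Sum>i\<le>length u. fa_poly p (take i u) * fa_poly q (drop i u)) = (\<Sum>i\<le>length u. coeff p i * coeff q (length u - i))"
    proof (rule sum.cong[OF refl])
      fix i assume "i \<in> {..length u}"
      then have "length (take i u) = i" by simp
      then show "fa_poly p (take i u) * fa_poly q (drop i u) = coeff p i * coeff q (length u - i)"
        unfolding fa_poly_char using st by simp
    qed
    also have "\<dots> = coeff (p * q) (length u)" by (simp add: coeff_mult)
    finally show ?thesis using True by (simp add: fa_mult_idx fa_poly_char[of "p*q"])
  next
    case False
    have "(\<Sum>i\<le>length u. fa_poly p (take i u) * fa_poly q (drop i u)) = 0"
    proof (rule sum.neutral, rule ballI)
      fix i assume "i \<in> {..length u}"
      have "\<not> (set (take i u) \<subseteq> {Lh} \<and> set (drop i u) \<subseteq> {Lh})"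
        using False by (metis append_take_drop_id set_append Un_subset_iff)
      then show "fa_poly p (take i u) * fa_poly q (drop i u) = 0" unfolding fa_poly_char by auto
    qed
    then show ?thesis using False by (simp add: fa_mult_idx fa_poly_char[of "p*q"])
  qed
qed

lemma fa_poly_monom1: "fa_poly (monom 1 i) = fa_word (replicate i Lh)"
  by (auto simp: fa_poly_def fa_word_def coeff_monom)

lemma fa_poly_const: "fa_poly [:c:] = (\<lambda>u. c * (if u = [] then 1 else 0))"
proof
  fix u
  show "fa_poly [:c:] u = c * (if u = [] then 1 else 0)"
    by (cases u) (auto simp: fa_poly_def coeff_pCons split: nat.splits)
qed

lemma fa_poly_const_mult: "fa_poly [:c:] \<otimes>\<^bsub>free_alg\<^esub> f = sc c f"
proof
  fix u
  have "(fa_poly [:c:] \<otimes>\<^bsub>free_alg\<^esub> f) u = c * (\<Sum>(p,q)\<in>splits u. (if p = [] then 1 else 0) * f q)"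
    by (simp add: fa_mult fa_poly_const sum_distrib_left case_prod_beta mult.assoc)
  then show "(fa_poly [:c:] \<otimes>\<^bsub>free_alg\<^esub> f) u = sc c f u"
    by (simp add: sum_splits_left1 sc_def)
qed

lemma fa_minus: "f \<in> carrier free_alg \<Longrightarrow> \<ominus>\<^bsub>free_alg\<^esub> f = (\<lambda>u. - f u)"
proof -
  assume f: "f \<in> carrier free_alg"
  have c: "(\<lambda>u. - f u) \<in> carrier free_alg" using f by simp
  show ?thesis
    by (rule abelian_group.minus_equality[OF ring.is_abelian_group[OF ring_free_alg]]) (use f c in auto)
qed

lemma fa_a_minus: "f \<in> carrier free_alg \<Longrightarrow> g \<in> carrier free_alg \<Longrightarrow> f \<ominus>\<^bsub>free_alg\<^esub> g = (\<lambda>u. f u - g u)"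
  by (simp add: a_minus_def fa_minus)

lemma smult_sum2: "smult c (sum f S) = (\<Sum>i\<in>S. smult c (f i))"
proof -
  have "smult c (sum f S) = [:c:] * sum f S" by simp
  also have "\<dots> = (\<Sum>i\<in>S. [:c:] * f i)" by (rule sum_distrib_left)
  finally show ?thesis by simp
qed

type_synonym 'k vec = "int \<Rightarrow> 'k poly"

definition lin :: "('k::field vec \<Rightarrow> 'k vec) \<Rightarrow> bool" where
  "lin L \<longleftrightarrow> (\<forall>v w. L (\<lambda>n. v n + w n) = (\<lambda>n. L v n + L w n)) \<and> (\<forall>c v. L (\<lambda>n. smult c (v n)) = (\<lambda>n. smult c (L v n)))"

lemma lin_zero: "lin L \<Longrightarrow> L (\<lambda>n. 0) = (\<lambda>n. 0)"
proof -
  assume "lin L"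
  then have h: "\<forall>c v. L (\<lambda>n. smult c (v n)) = (\<lambda>n. smult c (L v n))" unfolding lin_def by blast
  show ?thesis using h[rule_format, of 0 "\<lambda>n. 0"] by simp
qed

lemma lin_sum:
  assumes "lin L" "finite S"
  shows "L (\<lambda>n. \<Sum>j\<in>S. smult (c j) (v j n)) = (\<lambda>n. \<Sum>j\<in>S. smult (c j) (L (v j) n))"
  using assms(2)
proof (induction S)
  case empty
  then show ?case using lin_zero[OF assms(1)] by simp
next
  case (insert x F)
  have "L (\<lambda>n. \<Sum>j\<in>insert x F. smult (c j) (v j n)) = L (\<lambda>n. smult (c x) (v x n) + (\<Sum>j\<in>F. smult (c j) (v j n)))"
    using insert by simp
  also have "\<dots> = (\<lambda>n. L (\<lambda>n. smult (c x) (v x n)) n + L (\<lambda>n. \<Sum>j\<in>F. smult (c j) (v j n)) n)"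
    using assms(1) unfolding lin_def by simp
  also have "\<dots> = (\<lambda>n. \<Sum>j\<in>insert x F. smult (c j) (L (v j) n))"
    using insert assms(1) unfolding lin_def by simp
  finally show ?case .
qed

lemma lin_comp: "lin L \<Longrightarrow> lin M \<Longrightarrow> lin (L \<circ> M)"
  unfolding lin_def by simp

lemma lin_id: "lin id"
  unfolding lin_def by simp

lemma lin_funpow: "lin L \<Longrightarrow> lin (L ^^ k)"
  by (induction k) (auto simp: lin_id lin_comp)

primrec opw :: "(gwa_letter \<Rightarrow> 'k::field vec \<Rightarrow> 'k vec) \<Rightarrow> gwa_letter list \<Rightarrow> 'k vec \<Rightarrow> 'k vec" where
  "opw Op [] = id"
| "opw Op (l # u) = Op l \<circ> opw Op u"

lemma opw_append: "opw Op (u @ v) = opw Op u \<circ> opw Op v"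
  by (induction u) auto

lemma lin_opw: "(\<And>l. lin (Op l)) \<Longrightarrow> lin (opw Op u)"
  by (induction u) (auto simp: lin_id lin_comp)

definition act :: "(gwa_letter \<Rightarrow> 'k::field vec \<Rightarrow> 'k vec) \<Rightarrow> (gwa_letter list \<Rightarrow> 'k) \<Rightarrow> 'k vec \<Rightarrow> 'k vec" where
  "act Op f v = (\<lambda>n. \<Sum>u\<in>{u. f u \<noteq> 0}. smult (f u) (opw Op u v n))"

lemma act_superset:
  assumes "finite T" "{u. f u \<noteq> 0} \<subseteq> T"
  shows "act Op f v = (\<lambda>n. \<Sum>u\<in>T. smult (f u) (opw Op u v n))"
  unfolding act_def by (rule ext, rule sum.mono_neutral_left) (use assms in auto)

lemma act_add:
  assumes "f \<in> carrier free_alg" "g \<in> carrier free_alg"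
  shows "act Op (f \<oplus>\<^bsub>free_alg\<^esub> g) v = (\<lambda>n. act Op f v n + act Op g v n)"
proof -
  let ?T = "{u. f u \<noteq> 0} \<union> {u. g u \<noteq> 0}"
  have T: "finite ?T" using assms by simp
  have s: "{u. (f \<oplus>\<^bsub>free_alg\<^esub> g) u \<noteq> 0} \<subseteq> ?T" by auto
  show ?thesis
    unfolding act_superset[OF T s] act_superset[OF T, of f, OF Un_upper1] act_superset[OF T, of g, OF Un_upper2]
    by (auto simp: sum.distrib smult_add_left)
qed

lemma act_neg:
  assumes "f \<in> carrier free_alg"
  shows "act Op (\<ominus>\<^bsub>free_alg\<^esub> f) v = (\<lambda>n. - act Op f v n)"
  using assms by (simp add: fa_minus act_def sum_negf)

lemma act_minus:
  assumes "f \<in> carrier free_alg" "g \<in> carrier free_alg"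
  shows "act Op (f \<ominus>\<^bsub>free_alg\<^esub> g) v = (\<lambda>n. act Op f v n - act Op g v n)"
proof -
  have c: "\<ominus>\<^bsub>free_alg\<^esub> g \<in> carrier free_alg" using assms(2) by (simp add: fa_minus)
  have "act Op (f \<ominus>\<^bsub>free_alg\<^esub> g) v = act Op (f \<oplus>\<^bsub>free_alg\<^esub> (\<ominus>\<^bsub>free_alg\<^esub> g)) v"
    by (simp only: a_minus_def)
  also have "\<dots> = (\<lambda>n. act Op f v n + act Op (\<ominus>\<^bsub>free_alg\<^esub> g) v n)" by (rule act_add[OF assms(1) c])
  finally show ?thesis using act_neg[OF assms(2)] by simp
qed

lemma act_sc: "act Op (sc c f) v = (\<lambda>n. smult c (act Op f v n))"
proof (cases "c = 0")
  case True
  then show ?thesis by (simp add: act_def sc_def)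
next
  case False
  then show ?thesis by (simp add: act_def sc_def smult_sum2)
qed

lemma act_zero: "act Op (\<zero>\<^bsub>free_alg\<^esub>) v = (\<lambda>n. 0)"
  by (simp add: act_def)

lemma act_word: "act Op (fa_word w) v = opw Op w v"
proof -
  have "act Op (fa_word w) v = (\<lambda>n. \<Sum>u\<in>{w}. smult (fa_word w u) (opw Op u v n))"
    by (rule act_superset) (auto simp: fa_word_def split: if_splits)
  then show ?thesis by (simp add: fa_word_def)
qed

lemma act_one: "act Op (\<one>\<^bsub>free_alg\<^esub>) v = v"
proof -
  have "act Op (\<one>\<^bsub>free_alg\<^esub>) v = act Op (fa_word []) v"
    by (rule arg_cong[where f="\<lambda>f. act Op f v"]) (auto simp: fa_word_def)
  then show ?thesis by (simp only: act_word) simp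
qed

lemma act_lin: "(\<And>l. lin (Op l)) \<Longrightarrow> lin (act Op f)"
  unfolding lin_def act_def
  using lin_opw[of Op] unfolding lin_def
  by (auto simp: sum.distrib smult_add_right smult_sum2 fun_eq_iff mult.commute)

lemma sum_cart_fst_snd: "(\<Sum>pq\<in>A \<times> B. F (fst pq) (snd pq)) = (\<Sum>p\<in>A. \<Sum>q\<in>B. F p q)"
  by (simp add: sum.cartesian_product split_def)

lemma act_mult:
  assumes Op: "\<And>l. lin (Op l)"
    and f: "f \<in> carrier free_alg" and g: "g \<in> carrier free_alg"
  shows "act Op (f \<otimes>\<^bsub>free_alg\<^esub> g) v = act Op f (act Op g v)"
proof (rule ext)
  fix n
  let ?Sf = "{u. f u \<noteq> 0}" and ?Sg = "{u. g u \<noteq> 0}"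
  let ?T = "(\<lambda>(p,q). p @ q) ` (?Sf \<times> ?Sg)"
  have fin: "finite ?Sf" "finite ?Sg" using f g by auto
  have T: "finite ?T" using fin by (intro finite_imageI finite_cartesian_product)
  have "act Op (f \<otimes>\<^bsub>free_alg\<^esub> g) v n = (\<Sum>u\<in>?T. smult ((f \<otimes>\<^bsub>free_alg\<^esub> g) u) (opw Op u v n))"
    using act_superset[OF T supp_mult_subset] by simp
  also have "\<dots> = (\<Sum>u\<in>?T. \<Sum>(p,q)\<in>splits u. smult (f p * g q) (opw Op (p @ q) v n))"
    by (rule sum.cong[OF refl]) (auto simp: fa_mult smult_sum case_prod_beta splits_def intro!: sum.cong)
  also have "\<dots> = (\<Sum>(u,pq)\<in>Sigma ?T splits. smult (f (fst pq) * g (snd pq)) (opw Op (fst pq @ snd pq) v n))"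
    using T by (subst sum.Sigma[symmetric]) (auto simp: split_def)
  also have "\<dots> = (\<Sum>pq\<in>{pq. fst pq @ snd pq \<in> ?T}. smult (f (fst pq) * g (snd pq)) (opw Op (fst pq @ snd pq) v n))"
    by (rule sum.reindex_bij_witness[where i = "\<lambda>pq. (fst pq @ snd pq, pq)" and j = "snd"])
       (auto simp: splits_def)
  also have "\<dots> = (\<Sum>pq\<in>?Sf \<times> ?Sg. smult (f (fst pq) * g (snd pq)) (opw Op (fst pq @ snd pq) v n))"
  proof (rule sum.mono_neutral_right)
    have "{pq. fst pq @ snd pq \<in> ?T} \<subseteq> (\<Union>u\<in>?T. splits u)"
      by (auto simp: splits_def)
    then show "finite {pq. fst pq @ snd pq \<in> ?T}" using T by (rule finite_subset[OF _ finite_UN_I]) simp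
  qed auto
  also have "\<dots> = (\<Sum>p\<in>?Sf. smult (f p) (\<Sum>q\<in>?Sg. smult (g q) (opw Op p (opw Op q v) n)))"
    by (subst sum_cart_fst_snd) (simp add: smult_sum2 opw_append)
  also have "\<dots> = act Op f (act Op g v) n"
  proof -
    have "opw Op p (act Op g v) = (\<lambda>n. \<Sum>q\<in>?Sg. smult (g q) (opw Op p (opw Op q v) n))" for p
      unfolding act_def by (rule lin_sum[OF lin_opw[OF Op] fin(2)])
    then show ?thesis by (simp add: act_def)
  qed
  finally show "act Op (f \<otimes>\<^bsub>free_alg\<^esub> g) v n = act Op f (act Op g v) n" .
qed

declare fa_simps(1)[simp del]

lemma fa_idealI:
  fixes J :: "(gwa_letter list \<Rightarrow> 'k::field) set"
  assumes sub: "J \<subseteq> carrier free_alg" and z: "\<zero>\<^bsub>free_alg\<^esub> \<in> J"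
    and neg: "\<And>a. a \<in> J \<Longrightarrow> \<ominus>\<^bsub>free_alg\<^esub> a \<in> J"
    and add: "\<And>a b. a \<in> J \<Longrightarrow> b \<in> J \<Longrightarrow> a \<oplus>\<^bsub>free_alg\<^esub> b \<in> J"
    and l: "\<And>a x. a \<in> J \<Longrightarrow> x \<in> carrier free_alg \<Longrightarrow> x \<otimes>\<^bsub>free_alg\<^esub> a \<in> J"
    and r: "\<And>a x. a \<in> J \<Longrightarrow> x \<in> carrier free_alg \<Longrightarrow> a \<otimes>\<^bsub>free_alg\<^esub> x \<in> J"
  shows "ideal J free_alg"
proof -
  interpret R: ring "free_alg :: (gwa_letter list \<Rightarrow> 'k) ring" by (rule ring_free_alg)
  show ?thesis
  proof (rule idealI[OF ring_free_alg _ l r])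
    show "subgroup J (add_monoid free_alg)"
      by (rule R.add.subgroupI) (use sub z neg add in auto)
  qed
qed

definition kerA :: "(gwa_letter \<Rightarrow> 'k::field vec \<Rightarrow> 'k vec) \<Rightarrow> (gwa_letter list \<Rightarrow> 'k) set" where
  "kerA Op = {f \<in> carrier free_alg. \<forall>v. act Op f v = (\<lambda>n. 0)}"

lemma kerA_ideal:
  fixes Op :: "gwa_letter \<Rightarrow> 'k::field vec \<Rightarrow> 'k vec"
  assumes Op: "\<And>l. lin (Op l)"
  shows "ideal (kerA Op) free_alg"
proof (rule fa_idealI)
  show "kerA Op \<subseteq> carrier free_alg" by (auto simp: kerA_def)
  show "\<zero>\<^bsub>free_alg\<^esub> \<in> kerA Op" by (simp add: kerA_def act_zero del: fa_simps) (simp add: fa_simps)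
next
  fix a assume "a \<in> kerA Op"
  then have ac: "a \<in> carrier free_alg" and k: "\<forall>v. act Op a v = (\<lambda>n. 0)" by (auto simp: kerA_def)
  have c: "\<ominus>\<^bsub>free_alg\<^esub> a \<in> carrier free_alg" using ac by (simp add: fa_minus fa_simps)
  show "\<ominus>\<^bsub>free_alg\<^esub> a \<in> kerA Op"
    unfolding kerA_def using c act_neg[OF ac, of Op] k by auto
next
  fix a b assume "a \<in> kerA Op" "b \<in> kerA Op"
  moreover have "a \<oplus>\<^bsub>free_alg\<^esub> b \<in> carrier free_alg" if "a \<in> carrier free_alg" "b \<in> carrier free_alg"
    using ring.ring_simprules(1)[OF ring_free_alg] that by blast
  ultimately show "a \<oplus>\<^bsub>free_alg\<^esub> b \<in> kerA Op"
    unfolding kerA_def using act_add[of a b Op] by auto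
next
  fix a x assume a: "a \<in> kerA Op" and x: "x \<in> carrier (free_alg :: (gwa_letter list \<Rightarrow> 'k) ring)"
  have ac: "a \<in> carrier free_alg" using a by (simp add: kerA_def)
  have xa: "x \<otimes>\<^bsub>free_alg\<^esub> a \<in> carrier free_alg" "a \<otimes>\<^bsub>free_alg\<^esub> x \<in> carrier free_alg"
    using fa_mult_closed[OF x ac] fa_mult_closed[OF ac x] by auto
  have "act Op x (\<lambda>n. 0) = (\<lambda>n. 0)" by (rule lin_zero[OF act_lin[OF Op]])
  then show "x \<otimes>\<^bsub>free_alg\<^esub> a \<in> kerA Op"
    using a xa act_mult[OF Op x ac] by (auto simp: kerA_def)
  show "a \<otimes>\<^bsub>free_alg\<^esub> x \<in> kerA Op"
    using a xa act_mult[OF Op ac x] by (auto simp: kerA_def)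
qed

lemma gwa_rels_carrier: "gwa_rels (a::'k::field poly) h0 \<subseteq> carrier free_alg"
proof -
  interpret R: ring "free_alg :: (gwa_letter list \<Rightarrow> 'k) ring" by (rule ring_free_alg)
  show ?thesis
    unfolding gwa_rels_def by (auto simp del: fa_simps intro!: R.minus_closed R.m_closed)
qed

lemma gwa_ideal_subset_kerA:
  assumes Op: "\<And>l. lin (Op l)" and rels: "\<And>f. f \<in> gwa_rels a h0 \<Longrightarrow> \<forall>v. act Op f v = (\<lambda>n. 0)"
  shows "gwa_ideal a h0 \<subseteq> kerA Op"
  unfolding gwa_ideal_def
  by (rule ring.genideal_minimal[OF ring_free_alg kerA_ideal[OF Op]])
     (use rels gwa_rels_carrier[of a h0] in \<open>auto simp: kerA_def simp del: fa_simps\<close>)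

locale gw =
  fixes a :: "'k::field poly" and h0 :: 'k

sublocale gw \<subseteq> I: ideal "gwa_ideal a h0" free_alg
  unfolding gwa_ideal_def
  by (rule ring.genideal_ideal[OF ring_free_alg gwa_rels_carrier])

context gw
begin

abbreviation "cls \<equiv> gwa_class a h0"

lemma cls_eq_iff:
  assumes "f \<in> carrier free_alg" "g \<in> carrier free_alg"
  shows "cls f = cls g \<longleftrightarrow> f \<ominus>\<^bsub>free_alg\<^esub> g \<in> gwa_ideal a h0"
proof
  assume "cls f = cls g"
  then have "f \<in> gwa_ideal a h0 +>\<^bsub>free_alg\<^esub> g"
    using I.a_rcos_self[OF assms(1)] by (simp add: gwa_class_def)
  then show "f \<ominus>\<^bsub>free_alg\<^esub> g \<in> gwa_ideal a h0"
    using I.a_rcos_module_minus[OF ring_free_alg assms(2) assms(1)] by simp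
next
  assume "f \<ominus>\<^bsub>free_alg\<^esub> g \<in> gwa_ideal a h0"
  then have "f \<in> gwa_ideal a h0 +>\<^bsub>free_alg\<^esub> g"
    using I.a_rcos_module_minus[OF ring_free_alg assms(2) assms(1)] by simp
  then show "cls f = cls g"
    using I.a_repr_independence'[OF _ assms(2)] by (simp add: gwa_class_def)
qed

lemma cls_mult_cong:
  assumes "f \<in> carrier free_alg" "g \<in> carrier free_alg" "f' \<in> carrier free_alg" "g' \<in> carrier free_alg"
    and "cls f = cls f'" "cls g = cls g'"
  shows "cls (f \<otimes>\<^bsub>free_alg\<^esub> g) = cls (f' \<otimes>\<^bsub>free_alg\<^esub> g')"
proof -
  have "cls (f \<otimes>\<^bsub>free_alg\<^esub> g) = [mod gwa_ideal a h0:] cls f \<Otimes>\<^bsub>free_alg\<^esub> cls g"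
    using I.rcoset_mult_add[OF assms(1,2)] by (simp add: gwa_class_def)
  also have "\<dots> = [mod gwa_ideal a h0:] cls f' \<Otimes>\<^bsub>free_alg\<^esub> cls g'" using assms(5,6) by simp
  also have "\<dots> = cls (f' \<otimes>\<^bsub>free_alg\<^esub> g')"
    using I.rcoset_mult_add[OF assms(3,4)] by (simp add: gwa_class_def)
  finally show ?thesis .
qed

lemma cls_add_cong:
  assumes "f \<in> carrier free_alg" "g \<in> carrier free_alg" "f' \<in> carrier free_alg" "g' \<in> carrier free_alg"
    and "cls f = cls f'" "cls g = cls g'"
  shows "cls (f \<oplus>\<^bsub>free_alg\<^esub> g) = cls (f' \<oplus>\<^bsub>free_alg\<^esub> g')"
proof -
  have "cls (f \<oplus>\<^bsub>free_alg\<^esub> g) = cls f <+>\<^bsub>free_alg\<^esub> cls g"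
    using I.a_rcos_sum[OF assms(1,2)] by (simp add: gwa_class_def)
  also have "\<dots> = cls f' <+>\<^bsub>free_alg\<^esub> cls g'" using assms(5,6) by simp
  also have "\<dots> = cls (f' \<oplus>\<^bsub>free_alg\<^esub> g')"
    using I.a_rcos_sum[OF assms(3,4)] by (simp add: gwa_class_def)
  finally show ?thesis .
qed

lemma rel_cls:
  assumes "f \<in> carrier free_alg" "g \<in> carrier free_alg" "f \<ominus>\<^bsub>free_alg\<^esub> g \<in> gwa_rels a h0"
  shows "cls f = cls g"
proof -
  have "f \<ominus>\<^bsub>free_alg\<^esub> g \<in> gwa_ideal a h0"
    using assms(3) I.genideal_self[OF gwa_rels_carrier[of a h0]] unfolding gwa_ideal_def by blast
  then show ?thesis using cls_eq_iff[OF assms(1,2)] by simp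
qed

abbreviation "X \<equiv> fa_word [Lx]"
abbreviation "Y \<equiv> fa_word [Ly]"

lemma R1: "cls (Y \<otimes>\<^bsub>free_alg\<^esub> X) = cls (fa_poly a)"
  by (rule rel_cls) (auto simp: gwa_rels_def intro: fa_mult_closed)
lemma R2: "cls (X \<otimes>\<^bsub>free_alg\<^esub> Y) = cls (fa_poly (gwa_sigma h0 a))"
  by (rule rel_cls) (auto simp: gwa_rels_def intro: fa_mult_closed)
lemma R3: "cls (X \<otimes>\<^bsub>free_alg\<^esub> fa_poly p) = cls (fa_poly (gwa_sigma h0 p) \<otimes>\<^bsub>free_alg\<^esub> X)"
  by (rule rel_cls) (auto simp: gwa_rels_def intro: fa_mult_closed)
lemma R4: "cls (fa_poly p \<otimes>\<^bsub>free_alg\<^esub> Y) = cls (Y \<otimes>\<^bsub>free_alg\<^esub> fa_poly (gwa_sigma h0 p))"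
  by (rule rel_cls) (auto simp: gwa_rels_def intro: fa_mult_closed)

end

lemma lincl_induct:
  fixes M :: "(gwa_letter list \<Rightarrow> 'k::field) set"
  assumes zero: "(\<lambda>u. 0) \<in> M"
    and add: "\<And>f g. f \<in> M \<Longrightarrow> g \<in> M \<Longrightarrow> (\<lambda>u. f u + g u) \<in> M"
    and scm: "\<And>c f. f \<in> M \<Longrightarrow> sc c f \<in> M"
    and words: "\<And>u. u \<in> W \<Longrightarrow> fa_word u \<in> M"
    and f: "f \<in> carrier free_alg" and fW: "{u. f u \<noteq> 0} \<subseteq> W"
  shows "f \<in> M"
proof -
  have "\<forall>f. {u. f u \<noteq> 0} \<subseteq> S \<longrightarrow> S \<subseteq> W \<longrightarrow> f \<in> M" if "finite S" for S
    using that
  proof (induction S)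
    case empty
    then show ?case using zero by (auto simp: fun_eq_iff)
  next
    case (insert x S)
    show ?case
    proof (intro allI impI)
      fix f :: "gwa_letter list \<Rightarrow> 'k"
      assume s: "{u. f u \<noteq> 0} \<subseteq> insert x S" and w: "insert x S \<subseteq> W"
      have "{u. (f(x := 0)) u \<noteq> 0} \<subseteq> S" using s by auto
      then have m1: "f(x := 0) \<in> M" using insert.IH w by blast
      have m2: "sc (f x) (fa_word x) \<in> M" using scm words w by auto
      have "f = (\<lambda>u. (f(x := 0)) u + sc (f x) (fa_word x) u)"
        by (auto simp: sc_def fa_word_def)
      then show "f \<in> M" using add[OF m1 m2] by simp
    qed
  qed
  then show ?thesis using f fW by (auto simp: fa_simps)
qed

lemma sc_mult_right: "f \<otimes>\<^bsub>free_alg\<^esub> sc c g = sc c (f \<otimes>\<^bsub>free_alg\<^esub> (g::_ \<Rightarrow> 'k::field))"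
  by (auto simp: fa_mult sc_def sum_distrib_left case_prod_beta mult.left_commute)

lemma nfK_delta: "nfK (\<lambda>z'. if z' = z then 1 else 0) = fa_word (bw z)"
proof
  fix u
  show "nfK (\<lambda>z'. if z' = z then 1 else 0) u = fa_word (bw z) u"
  proof (cases "u \<in> range bw")
    case True
    then obtain w where w: "u = bw w" by auto
    then have "inv_into UNIV bw u = w" by (simp add: inj_bw)
    then show ?thesis using w inj_bw by (auto simp: nfK_def fa_word_def inj_eq)
  next
    case False
    then show ?thesis by (auto simp: nfK_def fa_word_def)
  qed
qed

lemma nfK_supp: "{u. nfK K u \<noteq> 0} \<subseteq> range bw"
  by (auto simp: nfK_def split: if_splits)

lemma bw_split: "bw (i,n) = replicate i Lh @ bw (0,n)"
  by (simp add: bw_def)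

lemma fa_word_bw: "fa_word (bw (i,n)) = fa_poly (monom 1 i) \<otimes>\<^bsub>free_alg\<^esub> fa_word (bw (0,n))"
  by (simp add: fa_poly_monom1 fa_word_mult bw_split[of i n])

lemma bw0_pos: "n \<ge> 0 \<Longrightarrow> bw (0,n) = replicate (nat n) Lx"
  by (simp add: bw_def)
lemma bw0_neg: "n \<le> 0 \<Longrightarrow> bw (0,n) = replicate (nat (-n)) Ly"
  by (cases "n = 0") (auto simp: bw_def)

lemma bw_pos: "n \<ge> 0 \<Longrightarrow> Lx # bw (0,n) = bw (0, n+1)"
proof -
  assume n: "n \<ge> 0"
  then have "nat (n+1) = Suc (nat n)" by simp
  then show ?thesis using n by (simp add: bw0_pos)
qed
lemma bw_neg: "n < 0 \<Longrightarrow> bw (0,n) = Ly # bw (0, n+1)"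
proof -
  assume n: "n < 0"
  then have "nat (-n) = Suc (nat (-(n+1)))" by simp
  then show ?thesis using n by (simp add: bw0_neg)
qed
lemma bw_pos2: "n > 0 \<Longrightarrow> bw (0,n) = Lx # bw (0, n - 1)"
proof -
  assume n: "n > 0"
  then have "nat n = Suc (nat (n - 1))" by simp
  then show ?thesis using n by (simp add: bw0_pos)
qed
lemma bw_neg2: "n \<le> 0 \<Longrightarrow> Ly # bw (0,n) = bw (0, n - 1)"
proof -
  assume n: "n \<le> 0"
  then have "nat (-(n - 1)) = Suc (nat (-n))" by simp
  then show ?thesis using n by (simp add: bw0_neg)
qed

lemma sigma_inv: "gwa_sigma h0 (gwa_sigma (-h0) p) = p"
proof -
  have "pcompose [:h0, 1:] [:- h0, 1:] = [:0, 1:]" by (simp add: pcompose_pCons)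
  then show ?thesis by (simp add: gwa_sigma_def pcompose_assoc[symmetric])
qed

context gw
begin

definition spn :: "(gwa_letter list \<Rightarrow> 'k) set" where
  "spn = {f \<in> carrier free_alg. \<exists>K. finite {z. K z \<noteq> 0} \<and> cls f = cls (nfK K)}"

lemma spn_cls: "g \<in> spn \<Longrightarrow> f \<in> carrier free_alg \<Longrightarrow> cls f = cls g \<Longrightarrow> f \<in> spn"
  unfolding spn_def by auto

lemma spn_nfK: "finite {z. K z \<noteq> 0} \<Longrightarrow> nfK K \<in> spn"
  unfolding spn_def using nfK_carrier by blast

lemma spn_zero: "(\<lambda>u. 0) \<in> spn"
proof -
  have "nfK (\<lambda>z. 0) = (\<lambda>u. (0::'k))" by (auto simp: nfK_def)
  then show ?thesis using spn_nfK[of "\<lambda>z. 0"] by simp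
qed

lemma spn_add: "f \<in> spn \<Longrightarrow> g \<in> spn \<Longrightarrow> (\<lambda>u. f u + g u) \<in> spn"
proof -
  assume f: "f \<in> spn" and g: "g \<in> spn"
  then obtain K1 K2 where k: "finite {z. K1 z \<noteq> 0}" "cls f = cls (nfK K1)" "finite {z. K2 z \<noteq> 0}" "cls g = cls (nfK K2)"
    and c: "f \<in> carrier free_alg" "g \<in> carrier free_alg"
    unfolding spn_def by blast
  have fin: "finite {z. K1 z + K2 z \<noteq> 0}"
    by (rule finite_subset[of _ "{z. K1 z \<noteq> 0} \<union> {z. K2 z \<noteq> 0}"]) (use k in auto)
  have "cls (f \<oplus>\<^bsub>free_alg\<^esub> g) = cls (nfK K1 \<oplus>\<^bsub>free_alg\<^esub> nfK K2)"
    by (rule cls_add_cong) (use c k nfK_carrier in auto)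
  then have "cls (f \<oplus>\<^bsub>free_alg\<^esub> g) = cls (nfK (\<lambda>z. K1 z + K2 z))" by (simp only: nfK_add)
  then have "cls (\<lambda>u. f u + g u) = cls (nfK (\<lambda>z. K1 z + K2 z))" by (simp only: fa_simps(2))
  moreover have "f \<oplus>\<^bsub>free_alg\<^esub> g \<in> carrier free_alg" using c by (rule I.a_closed)
  then have "(\<lambda>u. f u + g u) \<in> carrier free_alg" by (simp only: fa_simps(2))
  ultimately show ?thesis using fin unfolding spn_def by (intro CollectI conjI exI[of _ "\<lambda>z. K1 z + K2 z"]) auto
qed

lemma spn_sc: "f \<in> spn \<Longrightarrow> sc c f \<in> spn"
proof -
  assume f: "f \<in> spn"
  then obtain K where k: "finite {z. K z \<noteq> 0}" "cls f = cls (nfK K)" and c: "f \<in> carrier free_alg"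
    unfolding spn_def by blast
  have fin: "finite {z. c * K z \<noteq> 0}"
    by (rule finite_subset[of _ "{z. K z \<noteq> 0}"]) (use k in auto)
  have "cls (fa_poly [:c:] \<otimes>\<^bsub>free_alg\<^esub> f) = cls (fa_poly [:c:] \<otimes>\<^bsub>free_alg\<^esub> nfK K)"
    by (rule cls_mult_cong) (use c k nfK_carrier in auto)
  then have "cls (sc c f) = cls (nfK (\<lambda>z. c * K z))" by (simp add: fa_poly_const_mult nfK_sc)
  then have "\<exists>K'. finite {z. K' z \<noteq> 0} \<and> cls (sc c f) = cls (nfK K')"
    using fin by (intro exI[of _ "\<lambda>z. c * K z"]) simp
  moreover have "sc c f \<in> carrier free_alg" using c by (rule sc_carrier)
  ultimately show ?thesis unfolding spn_def by blast
qed

lemma spn_poly_word: "fa_poly q \<otimes>\<^bsub>free_alg\<^esub> fa_word (bw (0,m)) \<in> spn"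
proof -
  have "finite {z. (if snd z = m then coeff q (fst z) else 0) \<noteq> 0}"
    by (rule finite_subset[of _ "{..degree q} \<times> {m}"]) (auto simp: coeff_eq_0 split: if_splits intro: ccontr)
  then show ?thesis by (simp add: fa_poly_mult_word spn_nfK)
qed

lemma cls_l: "f \<in> carrier free_alg \<Longrightarrow> g \<in> carrier free_alg \<Longrightarrow> g' \<in> carrier free_alg \<Longrightarrow> cls g = cls g'
  \<Longrightarrow> cls (f \<otimes>\<^bsub>free_alg\<^esub> g) = cls (f \<otimes>\<^bsub>free_alg\<^esub> g')"
  by (rule cls_mult_cong) auto
lemma cls_r: "f \<in> carrier free_alg \<Longrightarrow> g \<in> carrier free_alg \<Longrightarrow> f' \<in> carrier free_alg \<Longrightarrow> cls f = cls f'
  \<Longrightarrow> cls (f \<otimes>\<^bsub>free_alg\<^esub> g) = cls (f' \<otimes>\<^bsub>free_alg\<^esub> g)"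
  by (rule cls_mult_cong) auto

lemmas mc = fa_mult_closed

lemma basis_step: "fa_word (l # bw z) \<in> spn"
proof -
  obtain i n where z: "z = (i,n)" by fastforce
  let ?P = "fa_poly (monom 1 i) :: gwa_letter list \<Rightarrow> 'k"
  let ?W = "fa_word (bw (0,n)) :: gwa_letter list \<Rightarrow> 'k"
  have Pc: "?P \<in> carrier free_alg" and Wc: "?W \<in> carrier free_alg" by auto
  have e: "fa_word (l # bw z) = fa_word [l] \<otimes>\<^bsub>free_alg\<^esub> (?P \<otimes>\<^bsub>free_alg\<^esub> ?W)"
    by (simp add: z fa_word_bw[symmetric] fa_word_mult)
  show ?thesis
  proof (cases l)
    case Lh
    have "fa_word (l # bw z) = fa_word (bw (Suc i, n))" by (simp add: Lh z bw_def)
    then have eq: "fa_word (l # bw z) = fa_poly (monom 1 (Suc i)) \<otimes>\<^bsub>free_alg\<^esub> fa_word (bw (0, n))"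
      by (simp only: fa_word_bw[of "Suc i" n])
    show ?thesis unfolding eq by (rule spn_poly_word)
  next
    case Lx
    let ?Ps = "fa_poly (gwa_sigma h0 (monom 1 i)) :: gwa_letter list \<Rightarrow> 'k"
    have Psc: "?Ps \<in> carrier free_alg" by simp
    show ?thesis
    proof (cases "n \<ge> 0")
      case True
      have "cls (fa_word (l # bw z)) = cls ((X \<otimes>\<^bsub>free_alg\<^esub> ?P) \<otimes>\<^bsub>free_alg\<^esub> ?W)"
        using e by (simp add: Lx fa_assoc)
      also have "\<dots> = cls ((?Ps \<otimes>\<^bsub>free_alg\<^esub> X) \<otimes>\<^bsub>free_alg\<^esub> ?W)"
        by (rule cls_r) (auto intro!: mc simp: R3)
      also have "\<dots> = cls (?Ps \<otimes>\<^bsub>free_alg\<^esub> fa_word (bw (0, n+1)))"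
        by (simp add: fa_assoc fa_word_mult bw_pos[OF True])
      finally show ?thesis
        by (rule spn_cls[OF spn_poly_word, rotated]) (simp add: mc)
    next
      case False
      let ?W' = "fa_word (bw (0,n+1)) :: gwa_letter list \<Rightarrow> 'k"
      let ?Sa = "fa_poly (gwa_sigma h0 a) :: gwa_letter list \<Rightarrow> 'k"
      have W: "?W = Y \<otimes>\<^bsub>free_alg\<^esub> ?W'" using False by (simp add: fa_word_mult bw_neg)
      have "cls (fa_word (l # bw z)) = cls ((X \<otimes>\<^bsub>free_alg\<^esub> ?P) \<otimes>\<^bsub>free_alg\<^esub> (Y \<otimes>\<^bsub>free_alg\<^esub> ?W'))"
        using e by (simp add: Lx fa_assoc W)
      also have "\<dots> = cls ((?Ps \<otimes>\<^bsub>free_alg\<^esub> X) \<otimes>\<^bsub>free_alg\<^esub> (Y \<otimes>\<^bsub>free_alg\<^esub> ?W'))"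
        by (rule cls_r) (auto intro!: mc simp: R3)
      also have "\<dots> = cls (?Ps \<otimes>\<^bsub>free_alg\<^esub> ((X \<otimes>\<^bsub>free_alg\<^esub> Y) \<otimes>\<^bsub>free_alg\<^esub> ?W'))"
        by (simp add: fa_assoc)
      also have "\<dots> = cls (?Ps \<otimes>\<^bsub>free_alg\<^esub> (?Sa \<otimes>\<^bsub>free_alg\<^esub> ?W'))"
        by (rule cls_l, simp, (rule mc; simp)+, rule cls_r) (auto intro!: mc simp: R2)
      also have "\<dots> = cls (fa_poly (gwa_sigma h0 (monom 1 i) * gwa_sigma h0 a) \<otimes>\<^bsub>free_alg\<^esub> ?W')"
        by (simp add: fa_assoc[symmetric] fa_poly_mult)
      finally show ?thesis
        by (rule spn_cls[OF spn_poly_word, rotated]) (simp add: mc)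
    qed
  next
    case Ly
    let ?Pi = "fa_poly (gwa_sigma (-h0) (monom 1 i)) :: gwa_letter list \<Rightarrow> 'k"
    have YP: "cls (Y \<otimes>\<^bsub>free_alg\<^esub> ?P) = cls (?Pi \<otimes>\<^bsub>free_alg\<^esub> Y)"
      using R4[of "gwa_sigma (-h0) (monom 1 i)"] by (simp add: sigma_inv)
    show ?thesis
    proof (cases "n > 0")
      case True
      let ?W' = "fa_word (bw (0,n-1)) :: gwa_letter list \<Rightarrow> 'k"
      have W: "?W = X \<otimes>\<^bsub>free_alg\<^esub> ?W'" using True by (simp add: fa_word_mult bw_pos2)
      have "cls (fa_word (l # bw z)) = cls ((Y \<otimes>\<^bsub>free_alg\<^esub> ?P) \<otimes>\<^bsub>free_alg\<^esub> (X \<otimes>\<^bsub>free_alg\<^esub> ?W'))"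
        using e by (simp add: Ly fa_assoc W)
      also have "\<dots> = cls ((?Pi \<otimes>\<^bsub>free_alg\<^esub> Y) \<otimes>\<^bsub>free_alg\<^esub> (X \<otimes>\<^bsub>free_alg\<^esub> ?W'))"
        by (rule cls_r) (auto intro!: mc simp: YP)
      also have "\<dots> = cls (?Pi \<otimes>\<^bsub>free_alg\<^esub> ((Y \<otimes>\<^bsub>free_alg\<^esub> X) \<otimes>\<^bsub>free_alg\<^esub> ?W'))"
        by (simp add: fa_assoc)
      also have "\<dots> = cls (?Pi \<otimes>\<^bsub>free_alg\<^esub> (fa_poly a \<otimes>\<^bsub>free_alg\<^esub> ?W'))"
        by (rule cls_l, simp, (rule mc; simp)+, rule cls_r) (auto intro!: mc simp: R1)
      also have "\<dots> = cls (fa_poly (gwa_sigma (-h0) (monom 1 i) * a) \<otimes>\<^bsub>free_alg\<^esub> ?W')"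
        by (simp add: fa_assoc[symmetric] fa_poly_mult)
      finally show ?thesis
        by (rule spn_cls[OF spn_poly_word, rotated]) (simp add: mc)
    next
      case False
      have "cls (fa_word (l # bw z)) = cls ((Y \<otimes>\<^bsub>free_alg\<^esub> ?P) \<otimes>\<^bsub>free_alg\<^esub> ?W)"
        using e by (simp add: Ly fa_assoc)
      also have "\<dots> = cls ((?Pi \<otimes>\<^bsub>free_alg\<^esub> Y) \<otimes>\<^bsub>free_alg\<^esub> ?W)"
        by (rule cls_r) (auto intro!: mc simp: YP)
      also have "\<dots> = cls (?Pi \<otimes>\<^bsub>free_alg\<^esub> fa_word (bw (0, n - 1)))"
        using False by (simp add: fa_assoc fa_word_mult bw_neg2)
      finally show ?thesis
        by (rule spn_cls[OF spn_poly_word, rotated]) (simp add: mc)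
    qed
  qed
qed

lemma spn_words: "fa_word u \<in> spn"
proof (induction u)
  case Nil
  have "bw (0,0) = []" by (simp add: bw_def)
  then have eq: "fa_word [] = nfK (\<lambda>z'. if z' = (0,0) then (1::'k) else 0)" by (simp add: nfK_delta)
  have fin: "finite {z. (if z = (0::nat,0::int) then (1::'k) else 0) \<noteq> 0}"
    by (rule finite_subset[of _ "{(0,0)}"]) auto
  show ?case unfolding eq by (rule spn_nfK[OF fin])
next
  case (Cons l u)
  then obtain K where k: "finite {z. K z \<noteq> 0}" "cls (fa_word u) = cls (nfK K)"
    unfolding spn_def by blast
  let ?M = "{g \<in> carrier free_alg. fa_word [l] \<otimes>\<^bsub>free_alg\<^esub> g \<in> spn}"
  have "nfK K \<in> ?M"
  proof (rule lincl_induct[where W = "range bw"])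
    have "(fa_word [l] :: gwa_letter list \<Rightarrow> 'k) \<otimes>\<^bsub>free_alg\<^esub> \<zero>\<^bsub>free_alg\<^esub> = \<zero>\<^bsub>free_alg\<^esub>"
      using I.r_null[OF fa_word_carrier[of "[l]"]] by simp
    then show "(\<lambda>u. 0) \<in> ?M"
      using spn_zero I.zero_closed by (simp only: fa_simps(4)) simp
  next
    fix f g assume "f \<in> ?M" "g \<in> ?M"
    then have fc: "f \<in> carrier free_alg" "g \<in> carrier free_alg"
      and fs: "fa_word [l] \<otimes>\<^bsub>free_alg\<^esub> f \<in> spn" "fa_word [l] \<otimes>\<^bsub>free_alg\<^esub> g \<in> spn" by auto
    have "fa_word [l] \<otimes>\<^bsub>free_alg\<^esub> (f \<oplus>\<^bsub>free_alg\<^esub> g) = (fa_word [l] \<otimes>\<^bsub>free_alg\<^esub> f) \<oplus>\<^bsub>free_alg\<^esub> (fa_word [l] \<otimes>\<^bsub>free_alg\<^esub> g)"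
      by (rule I.r_distr[OF fc fa_word_carrier])
    then have "fa_word [l] \<otimes>\<^bsub>free_alg\<^esub> (\<lambda>u. f u + g u) = (\<lambda>u. (fa_word [l] \<otimes>\<^bsub>free_alg\<^esub> f) u + (fa_word [l] \<otimes>\<^bsub>free_alg\<^esub> g) u)"
      by (simp only: fa_simps(2))
    moreover have "f \<oplus>\<^bsub>free_alg\<^esub> g \<in> carrier free_alg" using fc by (rule I.a_closed)
    then have "(\<lambda>u. f u + g u) \<in> carrier free_alg" by (simp only: fa_simps(2))
    ultimately show "(\<lambda>u. f u + g u) \<in> ?M" using spn_add[OF fs] by simp
  next
    fix c f assume "f \<in> ?M"
    then show "sc c f \<in> ?M" using spn_sc sc_carrier by (auto simp: sc_mult_right)
  next
    fix w assume "w \<in> range bw"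
    then show "fa_word w \<in> ?M" using basis_step by (auto simp: fa_word_mult)
  qed (use k nfK_carrier nfK_supp[of K] in auto)
  then have m: "fa_word [l] \<otimes>\<^bsub>free_alg\<^esub> nfK K \<in> spn" by simp
  have "cls (fa_word (l # u)) = cls (fa_word [l] \<otimes>\<^bsub>free_alg\<^esub> nfK K)"
    using cls_l[OF fa_word_carrier fa_word_carrier nfK_carrier[OF k(1)] k(2), of "[l]"]
    by (simp add: fa_word_mult)
  then show ?case by (rule spn_cls[OF m, rotated]) simp
qed

lemma spanning: "f \<in> carrier free_alg \<Longrightarrow> \<exists>K. finite {z. K z \<noteq> 0} \<and> cls f = cls (nfK K)"
proof -
  assume f: "f \<in> carrier free_alg"
  have "f \<in> spn"
    by (rule lincl_induct[where W = UNIV]) (use f spn_zero spn_add spn_sc spn_words in auto)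
  then show ?thesis unfolding spn_def by blast
qed

end

declare fa_simps(1)[simp del]

lemma pcomp_lin: "pcompose (pcompose p [:c, e:]) [:d, f:] = pcompose p [:c + e * d, e * f:]"
proof -
  have "pcompose [:c, e:] [:d, f:] = [:c + e * d, e * f:]"
    by (simp add: pcompose_pCons algebra_simps)
  then show ?thesis by (simp add: pcompose_assoc[symmetric])
qed

lemma pcompose_power: "pcompose (p ^ n) q = (pcompose p q) ^ n"
  by (induction n) (auto simp: pcompose_mult pcompose_1)

lemma pcompose_monom: "pcompose (monom c n) q = smult c (q ^ n)"
proof -
  have "pcompose [:0, 1:] q = q" by (simp add: pcompose_pCons)
  then show ?thesis by (simp add: monom_altdef pcompose_smult pcompose_power)
qed

lemma pcompose_as_sum: "pcompose p q = (\<Sum>j\<le>degree p. smult (coeff p j) (q ^ j))"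
proof -
  have "pcompose p q = pcompose (\<Sum>i\<le>degree p. monom (coeff p i) i) q"
    by (simp add: poly_as_sum_of_monoms)
  also have "\<dots> = (\<Sum>j\<le>degree p. smult (coeff p j) (q ^ j))"
    by (simp add: pcompose_sum pcompose_monom)
  finally show ?thesis .
qed

lemma linpow_monom: "[:0, t:] ^ i = monom (t ^ i) i"
proof -
  have "[:0, t:] = monom t 1" by (simp add: monom_Suc monom_0)
  then show ?thesis by (simp add: monom_power)
qed

lemma act_lc:
  assumes "finite S" "inj_on w S"
  shows "act Op (lc S c w) v = (\<lambda>n. \<Sum>z\<in>S. smult (c z) (opw Op (w z) v n))"
proof -
  have sub: "{u. lc S c w u \<noteq> 0} \<subseteq> w ` S"
  proof
    fix x assume "x \<in> {u. lc S c w u \<noteq> 0}"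
    then show "x \<in> w ` S" by (rule_tac ccontr) (simp add: lc_char[OF assms])
  qed
  have "act Op (lc S c w) v = (\<lambda>n. \<Sum>u\<in>w ` S. smult (lc S c w u) (opw Op u v n))"
    by (rule act_superset[OF finite_imageI[OF assms(1)] sub])
  also have "\<dots> = (\<lambda>n. \<Sum>z\<in>S. smult (c z) (opw Op (w z) v n))"
    using assms by (simp add: sum.reindex lc_char the_inv_into_f_f)
  finally show ?thesis .
qed

lemma opw_replicate: "opw Op (replicate k l) = Op l ^^ k"
  by (induction k) auto

lemma act_fa_poly:
  assumes h: "Op Lh = (\<lambda>v n. q * v n)"
  shows "act Op (fa_poly p) v = (\<lambda>n. pcompose p q * v n)"
proof -
  have inj: "inj_on (\<lambda>j. replicate j Lh) {..degree p}" by (auto simp: inj_on_def)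
  have pw: "(Op Lh ^^ j) v = (\<lambda>n. q ^ j * v n)" for j
    by (induction j) (auto simp: h)
  show ?thesis
    unfolding fa_poly_lc act_lc[OF finite_atMost inj] opw_replicate pw pcompose_as_sum
    by (simp add: sum_distrib_right)
qed

lemma act_nfK:
  assumes "finite {z. K z \<noteq> 0}"
  shows "act Op (nfK K) v = (\<lambda>n. \<Sum>z\<in>{z. K z \<noteq> 0}. smult (K z) (opw Op (bw z) v n))"
proof -
  have "lc {z. K z \<noteq> 0} K bw = nfK (\<lambda>z. if z \<in> {z. K z \<noteq> 0} then K z else 0)"
    by (rule lc_bw_nfK[OF assms])
  also have "(\<lambda>z. if z \<in> {z. K z \<noteq> 0} then K z else 0) = K" by auto
  finally have eq: "nfK K = lc {z. K z \<noteq> 0} K bw" by simp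
  show ?thesis unfolding eq by (rule act_lc[OF assms inj_on_subset[OF inj_bw subset_UNIV]])
qed

definition v0 :: "'k::field vec" where "v0 = (\<lambda>n. if n = 0 then 1 else 0)"

lemma faithful:
  fixes K :: "nat \<times> int \<Rightarrow> 'k::field"
  assumes fin: "finite {z. K z \<noteq> 0}" and t: "t \<noteq> 0" and c: "\<And>n. c n \<noteq> 0" and phi: "inj phi"
    and opw: "\<And>i n m. opw Op (bw (i,n)) v0 m = (if m = phi n then [:0,t:] ^ i * c n else 0)"
    and z: "act Op (nfK K) v0 = (\<lambda>m. 0)"
  shows "K z = 0"
proof -
  obtain j n where zj: "z = (j,n)" by fastforce
  let ?S = "{z. K z \<noteq> 0}"
  let ?Q = "\<Sum>z\<in>{z\<in>?S. snd z = n}. smult (K z) ([:0,t:] ^ fst z)"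
  have "act Op (nfK K) v0 (phi n) = (\<Sum>z\<in>?S. smult (K z) (opw Op (bw z) v0 (phi n)))"
    by (simp add: act_nfK[OF fin])
  also have "\<dots> = (\<Sum>z\<in>?S. if snd z = n then smult (K z) ([:0,t:] ^ fst z * c n) else 0)"
    by (rule sum.cong[OF refl]) (auto simp: opw phi inj_eq split: prod.splits)
  also have "\<dots> = (\<Sum>z\<in>{z\<in>?S. snd z = n}. smult (K z) ([:0,t:] ^ fst z * c n))"
    by (simp add: sum.inter_filter[OF fin, symmetric])
  also have "\<dots> = ?Q * c n"
    by (simp add: sum_distrib_right)
  finally have "?Q * c n = 0" using z by simp
  then have Q0: "?Q = 0" using c[of n] by simp
  have "coeff ?Q j = (\<Sum>z\<in>{z\<in>?S. snd z = n}. K z * (if fst z = j then t ^ fst z else 0))"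
    by (simp add: coeff_sum linpow_monom coeff_monom)
  also have "\<dots> = (\<Sum>z\<in>{z\<in>?S. snd z = n}. if z = (j,n) then K (j,n) * t ^ j else 0)"
    by (rule sum.cong[OF refl]) auto
  also have "\<dots> = (if (j,n) \<in> {z\<in>?S. snd z = n} then K (j,n) * t ^ j else 0)"
    by (rule sum.delta) (use fin in simp)
  finally have "(if (j,n) \<in> {z\<in>?S. snd z = n} then K (j,n) * t ^ j else 0) = 0"
    using Q0 by simp
  then show ?thesis using t zj by (auto split: if_splits)
qed

declare fa_simps(1)[simp del]

definition OA :: "'k::field poly \<Rightarrow> 'k \<Rightarrow> gwa_letter \<Rightarrow> 'k vec \<Rightarrow> 'k vec" where
  "OA a h0 l v = (case l of Lh \<Rightarrow> (\<lambda>n. [:0,1:] * v n)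
                         | Lx \<Rightarrow> (\<lambda>n. pcompose (v (n - 1)) [:- h0, 1:])
                         | Ly \<Rightarrow> (\<lambda>n. a * pcompose (v (n + 1)) [:h0, 1:]))"

definition OB :: "'k::field poly \<Rightarrow> 'k \<Rightarrow> nat \<Rightarrow> gwa_letter \<Rightarrow> 'k vec \<Rightarrow> 'k vec" where
  "OB a h0 r l = (case l of Lh \<Rightarrow> (\<lambda>v n. [:0, inverse (of_nat r):] * v n)
                         | Lx \<Rightarrow> OA a h0 Lx ^^ r
                         | Ly \<Rightarrow> OA a h0 Ly ^^ r)"

definition Pk :: "'k::field poly \<Rightarrow> 'k \<Rightarrow> nat \<Rightarrow> 'k poly" where
  "Pk a h0 k = (\<Prod>i<k. pcompose a [:of_nat i * h0, 1:])"

lemma OA_simps: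
  "OA a h0 Lh v = (\<lambda>n. [:0,1:] * v n)"
  "OA a h0 Lx v = (\<lambda>n. pcompose (v (n - 1)) [:- h0, 1:])"
  "OA a h0 Ly v = (\<lambda>n. a * pcompose (v (n + 1)) [:h0, 1:])"
  by (simp_all add: OA_def)

lemma OA_Lh: "OA a h0 Lh = (\<lambda>v n. [:0,1:] * v n)"
  by (rule ext) (simp add: OA_simps)

lemma OB_simps:
  "OB a h0 r Lh = (\<lambda>v n. [:0, inverse (of_nat r):] * v n)"
  "OB a h0 r Lx = OA a h0 Lx ^^ r"
  "OB a h0 r Ly = OA a h0 Ly ^^ r"
  by (simp_all add: OB_def)

lemma lin_mult: "lin (\<lambda>v n. q * v n)"
  unfolding lin_def by (simp add: algebra_simps)

lemma lin_OA: "lin (OA a h0 l)"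
proof (cases l)
  case Lh then show ?thesis using lin_mult[of "[:0,1:]"] by (simp add: OA_Lh)
next
  case Lx then show ?thesis unfolding lin_def by (simp add: OA_simps pcompose_add pcompose_smult)
next
  case Ly then show ?thesis unfolding lin_def by (simp add: OA_simps pcompose_add pcompose_smult algebra_simps)
qed

lemma lin_OB: "lin (OB a h0 r l)"
proof (cases l)
  case Lh then show ?thesis by (simp only: OB_simps(1) lin_mult)
qed (auto simp: OB_simps lin_funpow lin_OA)

lemma OA_Lx_pow: "(OA a h0 Lx ^^ k) v = (\<lambda>n. pcompose (v (n - int k)) [:- (of_nat k * h0), 1:])"
proof (induction k)
  case 0 then show ?case by simp
next
  case (Suc k)
  have "(OA a h0 Lx ^^ Suc k) v = OA a h0 Lx ((OA a h0 Lx ^^ k) v)" by simp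
  also have "\<dots> = (\<lambda>n. pcompose ((OA a h0 Lx ^^ k) v (n - 1)) [:- h0, 1:])" by (rule OA_simps)
  finally show ?case by (simp add: Suc pcomp_lin algebra_simps)
qed

lemma Pk_Suc: "Pk a h0 (Suc k) = a * pcompose (Pk a h0 k) [:h0, 1:]"
proof -
  have "Pk a h0 (Suc k) = pcompose a [:of_nat 0 * h0, 1:] * (\<Prod>i<k. pcompose a [:of_nat (Suc i) * h0, 1:])"
    unfolding Pk_def by (rule prod.lessThan_Suc_shift)
  also have "\<dots> = a * (\<Prod>i<k. pcompose (pcompose a [:of_nat i * h0, 1:]) [:h0, 1:])"
    by (simp add: pcomp_lin algebra_simps)
  also have "\<dots> = a * pcompose (Pk a h0 k) [:h0, 1:]"
    by (simp add: Pk_def pcompose_prod)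
  finally show ?thesis .
qed

lemma OA_Ly_pow: "(OA a h0 Ly ^^ k) v = (\<lambda>n. Pk a h0 k * pcompose (v (n + int k)) [:of_nat k * h0, 1:])"
proof (induction k)
  case 0 then show ?case by (simp add: Pk_def)
next
  case (Suc k)
  have "(OA a h0 Ly ^^ Suc k) v = OA a h0 Ly ((OA a h0 Ly ^^ k) v)" by simp
  also have "\<dots> = (\<lambda>n. a * pcompose ((OA a h0 Ly ^^ k) v (n + 1)) [:h0, 1:])" by (rule OA_simps)
  finally show ?case by (simp add: Suc pcomp_lin algebra_simps pcompose_mult Pk_Suc)
qed

lemma Pk_nonzero: "a \<noteq> 0 \<Longrightarrow> Pk a h0 k \<noteq> 0"
  unfolding Pk_def by (auto simp: pcompose_eq_0_iff)

lemma OA_Lh_pow: "(OA a h0 Lh ^^ i) v = (\<lambda>n. [:0,1:] ^ i * v n)"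
  by (induction i) (auto simp: OA_simps)

lemma OB_Lh_pow: "(OB a h0 r Lh ^^ i) v = (\<lambda>n. [:0, inverse (of_nat r):] ^ i * v n)"
  by (induction i) (auto simp: OB_simps)

lemma opw_bw: "opw Op (bw (i,n)) = (Op Lh ^^ i) \<circ> (if n \<ge> 0 then Op Lx ^^ nat n else Op Ly ^^ nat (-n))"
  by (simp add: bw_def opw_append opw_replicate)

definition cA :: "'k::field poly \<Rightarrow> 'k \<Rightarrow> int \<Rightarrow> 'k poly" where
  "cA a h0 n = (if n \<ge> 0 then 1 else Pk a h0 (nat (-n)))"

lemma opwA_v0: "opw (OA a h0) (bw (i,n)) v0 m = (if m = n then [:0,1:] ^ i * cA a h0 n else 0)"
  by (auto simp: opw_bw OA_Lh_pow OA_Lx_pow OA_Ly_pow v0_def cA_def pcompose_1)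

lemma opwB_eq:
  assumes r: "r \<ge> 1"
  shows "opw (OB a h0 r) (bw (i,n)) v = (\<lambda>m. smult (inverse (of_nat r) ^ i) (opw (OA a h0) (bw (i, int r * n)) v m))"
proof -
  have "opw (OB a h0 r) (bw (0,n)) = opw (OA a h0) (bw (0, int r * n))"
  proof (cases "n \<ge> 0")
    case True
    then have "int r * n \<ge> 0" "nat (int r * n) = r * nat n" using r by (auto simp: nat_mult_distrib)
    then show ?thesis using True by (simp add: opw_bw OB_simps funpow_mult)
  next
    case False
    have "int r * n < 0" using False r by (simp add: mult_pos_neg)
    moreover have "nat (- (int r * n)) = r * nat (-n)"
    proof -
      have "- (int r * n) = int r * (- n)" by simp
      then have "nat (- (int r * n)) = nat (int r) * nat (- n)" using nat_mult_distrib[of "int r" "- n"] by simp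
      then show ?thesis by simp
    qed
    ultimately have "\<not> int r * n \<ge> 0" "nat (- (int r * n)) = r * nat (-n)" by auto
    then show ?thesis using False by (simp add: opw_bw OB_simps funpow_mult)
  qed
  moreover have "[:0, inverse (of_nat r) :: 'a:] ^ i = smult (inverse (of_nat r) ^ i) ([:0,1:] ^ i)"
    by (simp add: linpow_monom smult_monom)
  ultimately show ?thesis
    using opw_bw[of "OB a h0 r" i n] opw_bw[of "OB a h0 r" 0 n] opw_bw[of "OA a h0" i "int r * n"] opw_bw[of "OA a h0" 0 "int r * n"]
    by (simp add: OB_Lh_pow OA_Lh_pow)
qed

declare fa_simps(1)[simp del]

lemma act_word_mult_left:
  assumes "\<And>l. lin (Op l)" "g \<in> carrier free_alg"
  shows "act Op (fa_word [l] \<otimes>\<^bsub>free_alg\<^esub> g) v = Op l (act Op g v)"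
  by (simp add: act_mult[OF assms(1) fa_word_carrier assms(2)] act_word)

lemma act_word_mult_right:
  assumes "\<And>l. lin (Op l)" "g \<in> carrier free_alg"
  shows "act Op (g \<otimes>\<^bsub>free_alg\<^esub> fa_word [l]) v = act Op g (Op l v)"
  by (simp add: act_mult[OF assms(1) assms(2) fa_word_carrier] act_word)

lemma relsA:
  assumes "f \<in> gwa_rels a h0"
  shows "act (OA a h0) f v = (\<lambda>n. 0)"
proof -
  note L = lin_OA[of a h0]
  note mc = fa_mult_closed fa_word_carrier fa_poly_carrier
  note A = act_minus act_word_mult_left[OF L] act_word_mult_right[OF L] act_fa_poly[where Op="OA a h0" and q="[:0,1:]", OF OA_Lh] act_word
  have s1: "pcompose (pcompose q [:- h0, 1:]) [:h0, 1:] = q" for q :: "'a poly"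
    by (simp add: pcomp_lin)
  have s2: "pcompose (pcompose q [:h0, 1:]) [:- h0, 1:] = q" for q :: "'a poly"
    by (simp add: pcomp_lin)
  from assms show ?thesis
    unfolding gwa_rels_def
    by (auto simp: A mc OA_simps s1 s2 pcompose_mult gwa_sigma_def algebra_simps)
qed

lemma sigma_inv_pow: "(gwa_sigma (- h0) ^^ i) a = pcompose a [:of_nat i * h0, 1:]"
  by (induction i) (auto simp: gwa_sigma_def pcomp_lin algebra_simps)

definition atil :: "'k::field poly \<Rightarrow> 'k \<Rightarrow> nat \<Rightarrow> 'k poly" where
  "atil a h0 r = (\<Prod>i<r. pcompose ((gwa_sigma (- h0) ^^ i) a) [:0, of_nat r:])"

lemma atil_Pk:
  assumes "(of_nat r :: 'k::field) \<noteq> 0"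
  shows "pcompose (atil a h0 r) [:0, inverse (of_nat r :: 'k):] = Pk a h0 r"
  unfolding atil_def Pk_def using assms
  by (simp add: pcompose_prod sigma_inv_pow pcomp_lin)

lemma relsB:
  fixes a :: "'k::field poly"
  assumes f: "f \<in> gwa_rels (atil a h0 r) h0" and r: "(of_nat r :: 'k) \<noteq> 0"
  shows "act (OB a h0 r) f v = (\<lambda>n. 0)"
proof -
  let ?R = "of_nat r :: 'k"
  let ?ri = "inverse (of_nat r) :: 'k"
  note L = lin_OB[of a h0 r]
  note mc = fa_mult_closed fa_word_carrier fa_poly_carrier
  note A = act_minus act_word_mult_left[OF L] act_word_mult_right[OF L] act_fa_poly[where Op="OB a h0 r" and q="[:0, inverse (of_nat r):]", OF OB_simps(1)] act_word
  have rh: "?ri * (?R * h0) = h0" using r by (simp add: mult.assoc[symmetric])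
  have F1: "pcompose (pcompose q [:0, ?ri:]) [:- (?R * h0), 1:] = pcompose q [:- h0, ?ri:]" for q
    using r by (simp add: pcomp_lin rh)
  have F2: "pcompose (pcompose q [:- h0, 1:]) [:0, ?ri:] = pcompose q [:- h0, ?ri:]" for q
    by (simp add: pcomp_lin)
  have F3: "pcompose (pcompose q [:- h0, ?ri:]) [:?R * h0, 1:] = pcompose q [:0, ?ri:]" for q
    using r by (simp add: pcomp_lin rh)
  have F4: "pcompose (pcompose q [:- (?R * h0), 1:]) [:?R * h0, 1:] = q" for q
    by (simp add: pcomp_lin)
  have F5: "pcompose (pcompose q [:?R * h0, 1:]) [:- (?R * h0), 1:] = q" for q
    by (simp add: pcomp_lin)
  have F6: "pcompose (atil a h0 r) [:0, ?ri:] = Pk a h0 r" by (rule atil_Pk[OF r])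
  have F7: "pcompose (Pk a h0 r) [:- (?R * h0), 1:] = pcompose (atil a h0 r) [:- h0, ?ri:]"
    using F1[of "atil a h0 r"] F6 by simp
  from f show ?thesis
    unfolding gwa_rels_def
    by (auto simp: A mc OB_simps(2,3) OA_Lx_pow OA_Ly_pow gwa_sigma_def pcompose_mult F1 F2 F3 F4 F5 F6 F7)
qed

declare fa_simps(1)[simp del]

lemma fa_minus_zero: "f \<in> carrier free_alg \<Longrightarrow> f \<ominus>\<^bsub>free_alg\<^esub> \<zero>\<^bsub>free_alg\<^esub> = f"
  by (simp add: fa_a_minus fa_simps)

lemma nfK_zero: "nfK (\<lambda>z. 0) = (\<lambda>u. (0::'k::field))"
  by (auto simp: nfK_def)

lemma ker_generic:
  fixes a :: "'k::field poly" and Op :: "gwa_letter \<Rightarrow> 'k vec \<Rightarrow> 'k vec"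
  assumes L: "\<And>l. lin (Op l)"
    and rels: "\<And>f v. f \<in> gwa_rels a h0 \<Longrightarrow> act Op f v = (\<lambda>n. 0)"
    and faith: "\<And>K. finite {z. K z \<noteq> 0} \<Longrightarrow> act Op (nfK K) v0 = (\<lambda>m. 0) \<Longrightarrow> K = (\<lambda>z. 0)"
    and f: "f \<in> carrier free_alg"
  shows "f \<in> gwa_ideal a h0 \<longleftrightarrow> (\<forall>v. act Op f v = (\<lambda>n. 0))"
proof -
  have rels': "\<And>f. f \<in> gwa_rels a h0 \<Longrightarrow> \<forall>v. act Op f v = (\<lambda>n. 0)" using rels by blast
  note sub = gwa_ideal_subset_kerA[OF L rels']
  show ?thesis
  proof
  assume "f \<in> gwa_ideal a h0"
  then show "\<forall>v. act Op f v = (\<lambda>n. 0)"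
    using sub by (auto simp: kerA_def)
next
  assume z: "\<forall>v. act Op f v = (\<lambda>n. 0)"
  interpret gw a h0 .
  obtain K where K: "finite {z. K z \<noteq> 0}" "cls f = cls (nfK K)" using spanning[OF f] by blast
  have Kc: "nfK K \<in> carrier free_alg" using nfK_carrier[OF K(1)] .
  have "f \<ominus>\<^bsub>free_alg\<^esub> nfK K \<in> gwa_ideal a h0" using K(2) cls_eq_iff[OF f Kc] by simp
  then have "act Op (f \<ominus>\<^bsub>free_alg\<^esub> nfK K) v0 = (\<lambda>n. 0)"
    using sub by (auto simp: kerA_def)
  then have "act Op (nfK K) v0 = (\<lambda>n. 0)"
    using act_minus[OF f Kc, of Op v0] z by (simp add: fun_eq_iff)
  then have "K = (\<lambda>z. 0)" using faith[OF K(1)] by simp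
  then have "cls f = cls \<zero>\<^bsub>free_alg\<^esub>" using K(2) by (simp add: nfK_zero fa_simps)
  then have "f \<ominus>\<^bsub>free_alg\<^esub> \<zero>\<^bsub>free_alg\<^esub> \<in> gwa_ideal a h0"
    using cls_eq_iff[OF f I.zero_closed] by simp
  then show "f \<in> gwa_ideal a h0" using fa_minus_zero[OF f] by simp
qed
qed

lemma eq_generic:
  fixes a :: "'k::field poly" and Op :: "gwa_letter \<Rightarrow> 'k vec \<Rightarrow> 'k vec"
  assumes L: "\<And>l. lin (Op l)"
    and rels: "\<And>f v. f \<in> gwa_rels a h0 \<Longrightarrow> act Op f v = (\<lambda>n. 0)"
    and faith: "\<And>K. finite {z. K z \<noteq> 0} \<Longrightarrow> act Op (nfK K) v0 = (\<lambda>m. 0) \<Longrightarrow> K = (\<lambda>z. 0)"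
    and f: "f \<in> carrier free_alg" and g: "g \<in> carrier free_alg"
  shows "gwa_class a h0 f = gwa_class a h0 g \<longleftrightarrow> (\<forall>v. act Op f v = act Op g v)"
proof -
  interpret gw a h0 .
  have mc: "f \<ominus>\<^bsub>free_alg\<^esub> g \<in> carrier free_alg" using f g by simp
  have k: "f \<ominus>\<^bsub>free_alg\<^esub> g \<in> gwa_ideal a h0 \<longleftrightarrow> (\<forall>v. act Op (f \<ominus>\<^bsub>free_alg\<^esub> g) v = (\<lambda>n. 0))"
    by (rule ker_generic[OF L rels faith mc])
  show ?thesis
    unfolding cls_eq_iff[OF f g] k act_minus[OF f g]
    by (auto simp: fun_eq_iff)
qed

lemma faithA:
  fixes a :: "'k::field poly"
  assumes a: "a \<noteq> 0" and K: "finite {z. K z \<noteq> 0}" and z: "act (OA a h0) (nfK K) v0 = (\<lambda>m. 0)"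
  shows "K = (\<lambda>z. 0)"
proof
  fix y
  show "K y = 0"
    by (rule faithful[OF K one_neq_zero _ inj_on_id2 _ z, where c = "cA a h0"])
       (auto simp: cA_def Pk_nonzero[OF a] opwA_v0)
qed

lemma faithB:
  fixes a :: "'k::field_char_0 poly"
  assumes a: "a \<noteq> 0" and r: "r \<ge> 1" and K: "finite {z. K z \<noteq> 0}" and z: "act (OB a h0 r) (nfK K) v0 = (\<lambda>m. 0)"
  shows "K = (\<lambda>z. 0)"
proof
  fix y
  have R: "(of_nat r :: 'k) \<noteq> 0" using r by simp
  have inj: "inj (\<lambda>n. int r * n)" using r by (auto simp: inj_def)
  have pw: "[:0, inverse (of_nat r) :: 'k:] ^ i = smult (inverse (of_nat r) ^ i) ([:0,1:] ^ i)" for i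
    by (simp add: linpow_monom smult_monom)
  show "K y = 0"
    by (rule faithful[OF K _ _ inj _ z, where c = "\<lambda>n. cA a h0 (int r * n)" and t = "inverse (of_nat r)"])
       (use r in \<open>auto simp: R cA_def Pk_nonzero[OF a] opwA_v0 opwB_eq[OF r] pw\<close>)
qed

declare fa_simps(1)[simp del]

definition trK :: "nat \<Rightarrow> (nat \<times> int \<Rightarrow> 'k::field) \<Rightarrow> nat \<times> int \<Rightarrow> 'k" where
  "trK r K z = K (fst z, int r * snd z) * of_nat r ^ fst z"

lemma corr:
  fixes a :: "'k::field_char_0 poly"
  assumes r: "r \<ge> 1" and K: "finite {z. K z \<noteq> 0}" and dv: "\<And>z. K z \<noteq> 0 \<Longrightarrow> int r dvd snd z"
  shows "finite {z. trK r K z \<noteq> 0}" "act (OB a h0 r) (nfK (trK r K)) v = act (OA a h0) (nfK K) v"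
proof -
  let ?g = "\<lambda>z::nat \<times> int. (fst z, int r * snd z)"
  have R: "(of_nat r :: 'k) \<noteq> 0" using r by simp
  have inj: "inj ?g" using r by (auto simp: inj_def prod_eq_iff)
  have SB: "{z. trK r K z \<noteq> 0} = ?g -` {z. K z \<noteq> 0}"
    using R by (auto simp: trK_def)
  show finB: "finite {z. trK r K z \<noteq> 0}"
    unfolding SB by (rule finite_vimageI[OF K inj])
  have img: "?g ` {z. trK r K z \<noteq> 0} = {z. K z \<noteq> 0}"
  proof
    show "?g ` {z. trK r K z \<noteq> 0} \<subseteq> {z. K z \<noteq> 0}" unfolding SB by auto
  next
    show "{z. K z \<noteq> 0} \<subseteq> ?g ` {z. trK r K z \<noteq> 0}"
    proof
      fix z assume z: "z \<in> {z. K z \<noteq> 0}"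
      then have "int r dvd snd z" using dv by simp
      then obtain k where k: "snd z = int r * k" by (auto elim: dvdE)
      have "z = ?g (fst z, k)" using k by (simp add: prod_eq_iff)
      moreover have "(fst z, int r * k) = z" using k by (simp add: prod_eq_iff)
      then have "(fst z, k) \<in> {z. trK r K z \<noteq> 0}" using z R by (auto simp: trK_def)
      ultimately show "z \<in> ?g ` {z. trK r K z \<noteq> 0}" by blast
    qed
  qed
  have c: "smult (trK r K z) (opw (OB a h0 r) (bw z) v m) = smult (K (?g z)) (opw (OA a h0) (bw (?g z)) v m)" for z m
  proof -
    obtain i n where z: "z = (i,n)" by fastforce
    have "of_nat r ^ i * inverse (of_nat r) ^ i = (1::'k)" using R by (simp add: power_mult_distrib[symmetric])
    then show ?thesis by (simp add: z trK_def opwB_eq[OF r] mult.assoc)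
  qed
  show "act (OB a h0 r) (nfK (trK r K)) v = act (OA a h0) (nfK K) v"
  proof
    fix m
    have "act (OB a h0 r) (nfK (trK r K)) v m = (\<Sum>z\<in>{z. trK r K z \<noteq> 0}. smult (K (?g z)) (opw (OA a h0) (bw (?g z)) v m))"
      by (simp add: act_nfK[OF finB] c)
    also have "\<dots> = (\<Sum>y\<in>?g ` {z. trK r K z \<noteq> 0}. smult (K y) (opw (OA a h0) (bw y) v m))"
      by (rule sum.reindex[symmetric, unfolded comp_def]) (rule inj_on_subset[OF inj subset_UNIV])
    also have "\<dots> = act (OA a h0) (nfK K) v m"
      by (simp add: act_nfK[OF K] img)
    finally show "act (OB a h0 r) (nfK (trK r K)) v m = act (OA a h0) (nfK K) v m" .
  qed
qed

definition wt :: "'k::field \<Rightarrow> gwa_letter list \<Rightarrow> 'k" where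
  "wt w u = w ^ count_list u Lx * inverse w ^ count_list u Ly"

lemma theta_wt: "theta_free w f = (\<lambda>u. wt w u * f u)"
  by (simp add: theta_free_def wt_def)

lemma wt_append: "wt w (p @ q) = wt w p * wt w q"
  by (simp add: wt_def power_add)

lemma theta_mult: "theta_free w (f \<otimes>\<^bsub>free_alg\<^esub> g) = theta_free w f \<otimes>\<^bsub>free_alg\<^esub> theta_free w g"
proof
  fix u
  have "wt w u * (\<Sum>(p,q)\<in>splits u. f p * g q) = (\<Sum>(p,q)\<in>splits u. wt w p * f p * (wt w q * g q))"
    by (auto simp: sum_distrib_left splits_def wt_append mult_ac intro!: sum.cong)
  then show "theta_free w (f \<otimes>\<^bsub>free_alg\<^esub> g) u = (theta_free w f \<otimes>\<^bsub>free_alg\<^esub> theta_free w g) u"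
    by (simp add: theta_wt fa_mult case_prod_beta)
qed

lemma theta_add: "theta_free w (f \<oplus>\<^bsub>free_alg\<^esub> g) = theta_free w f \<oplus>\<^bsub>free_alg\<^esub> theta_free w g"
  by (simp add: theta_wt algebra_simps)

lemma theta_carrier: "f \<in> carrier free_alg \<Longrightarrow> theta_free w f \<in> carrier free_alg"
  by (simp add: theta_wt fa_simps)

lemma theta_minus: "f \<in> carrier free_alg \<Longrightarrow> g \<in> carrier free_alg \<Longrightarrow>
  theta_free w (f \<ominus>\<^bsub>free_alg\<^esub> g) = theta_free w f \<ominus>\<^bsub>free_alg\<^esub> theta_free w g"
  by (simp add: fa_a_minus theta_carrier) (simp add: theta_wt algebra_simps)

lemma theta_neg: "f \<in> carrier free_alg \<Longrightarrow> theta_free w (\<ominus>\<^bsub>free_alg\<^esub> f) = \<ominus>\<^bsub>free_alg\<^esub> theta_free w f"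
  by (simp add: fa_minus theta_carrier) (simp add: theta_wt)

lemma theta_poly: "theta_free w (fa_poly p) = fa_poly p"
proof
  fix u
  show "theta_free w (fa_poly p) u = fa_poly p u"
  proof (cases "set u \<subseteq> {Lh}")
    case True
    then have "count_list u Lx = 0" "count_list u Ly = 0"
      by (auto simp: count_list_0_iff)
    then show ?thesis by (simp add: theta_wt wt_def)
  next
    case False
    then show ?thesis by (simp add: theta_wt fa_poly_char)
  qed
qed

lemma theta_word: "theta_free w (fa_word u) = sc (wt w u) (fa_word u)"
  by (auto simp: theta_wt sc_def fa_word_def)

lemma sc_mult_left: "sc c f \<otimes>\<^bsub>free_alg\<^esub> g = sc c (f \<otimes>\<^bsub>free_alg\<^esub> (g::_ \<Rightarrow> 'k::field))"
  by (auto simp: fa_mult sc_def sum_distrib_left case_prod_beta mult.assoc)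

lemma sc_minus: "f \<in> carrier free_alg \<Longrightarrow> g \<in> carrier free_alg \<Longrightarrow>
  sc c f \<ominus>\<^bsub>free_alg\<^esub> sc c g = sc c (f \<ominus>\<^bsub>free_alg\<^esub> g)"
  by (simp add: fa_a_minus sc_carrier) (auto simp: sc_def algebra_simps)

lemma sc_one: "sc 1 f = f"
  by (simp add: sc_def)

lemma sc_sc: "sc c (sc d f) = sc (c * d) f"
  by (simp add: sc_def mult.assoc)

lemma theta_ideal:
  fixes a :: "'k::field poly"
  assumes w: "w \<noteq> 0" and f: "f \<in> gwa_ideal a h0"
  shows "theta_free w f \<in> gwa_ideal a h0"
proof -
  interpret gw a h0 .
  let ?J = "{f \<in> carrier free_alg. theta_free w f \<in> gwa_ideal a h0}"
  have scI: "g \<in> gwa_ideal a h0 \<Longrightarrow> sc c g \<in> gwa_ideal a h0" for g c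
    using I.I_l_closed[of g "fa_poly [:c:]"] by (simp add: fa_poly_const_mult)
  have relI: "g \<in> gwa_rels a h0 \<Longrightarrow> g \<in> gwa_ideal a h0" for g
    using I.genideal_self[OF gwa_rels_carrier[of a h0]] unfolding gwa_ideal_def by blast
  have J: "ideal ?J free_alg"
  proof (rule fa_idealI)
    show "\<zero>\<^bsub>free_alg\<^esub> \<in> ?J" using additive_subgroup.zero_closed[OF I.is_additive_subgroup] by (simp add: theta_wt fa_simps)
  next
    fix g assume "g \<in> ?J" then show "\<ominus>\<^bsub>free_alg\<^esub> g \<in> ?J"
      by (auto simp: theta_neg I.a_inv_closed)
  next
    fix g h assume "g \<in> ?J" "h \<in> ?J" then show "g \<oplus>\<^bsub>free_alg\<^esub> h \<in> ?J"
      by (auto simp only: theta_add mem_Collect_eq intro!: I.a_closed I.add.m_closed)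
  next
    fix g x assume g: "g \<in> ?J" and x: "x \<in> carrier (free_alg :: (gwa_letter list \<Rightarrow> 'k) ring)"
    have gc: "g \<in> carrier free_alg" and tg: "theta_free w g \<in> gwa_ideal a h0" using g by auto
    have tx: "theta_free w x \<in> carrier free_alg" using x by (rule theta_carrier)
    show "x \<otimes>\<^bsub>free_alg\<^esub> g \<in> ?J"
      using I.I_l_closed[OF tg tx] fa_mult_closed[OF x gc] by (simp add: theta_mult)
    show "g \<otimes>\<^bsub>free_alg\<^esub> x \<in> ?J"
      using I.I_r_closed[OF tg tx] fa_mult_closed[OF gc x] by (simp add: theta_mult)
  qed auto
  have wts: "wt w [Lx] = w" "wt w [Ly] = inverse w" by (simp_all add: wt_def)
  have rels: "gwa_rels a h0 \<subseteq> ?J"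
  proof
    fix g assume g: "g \<in> gwa_rels a h0"
    have gc: "g \<in> carrier free_alg" using g gwa_rels_carrier by blast
    note mc = fa_mult_closed fa_word_carrier fa_poly_carrier sc_carrier
    have S: "theta_free w (sc c f) = sc c (theta_free w f)" for c f by (simp add: theta_wt sc_def mult.left_commute)
    from g consider (a1) "g = Y \<otimes>\<^bsub>free_alg\<^esub> X \<ominus>\<^bsub>free_alg\<^esub> fa_poly a"
      | (a2) "g = X \<otimes>\<^bsub>free_alg\<^esub> Y \<ominus>\<^bsub>free_alg\<^esub> fa_poly (gwa_sigma h0 a)"
      | (a3) p where "g = X \<otimes>\<^bsub>free_alg\<^esub> fa_poly p \<ominus>\<^bsub>free_alg\<^esub> fa_poly (gwa_sigma h0 p) \<otimes>\<^bsub>free_alg\<^esub> X"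
      | (a4) p where "g = fa_poly p \<otimes>\<^bsub>free_alg\<^esub> Y \<ominus>\<^bsub>free_alg\<^esub> Y \<otimes>\<^bsub>free_alg\<^esub> fa_poly (gwa_sigma h0 p)"
      unfolding gwa_rels_def by blast
    then have "theta_free w g \<in> gwa_ideal a h0"
    proof cases
      case a1
      then have "theta_free w g = g"
        using w by (simp add: theta_minus mc theta_mult theta_word wts theta_poly sc_mult_left sc_mult_right sc_sc sc_one)
      then show ?thesis using g relI by simp
    next
      case a2
      then have "theta_free w g = g"
        using w by (simp add: theta_minus mc theta_mult theta_word wts theta_poly sc_mult_left sc_mult_right sc_sc sc_one)
      then show ?thesis using g relI by simp
    next
      case a3
      then have "theta_free w g = sc w g"
        by (simp add: theta_minus mc theta_mult theta_word wts theta_poly sc_mult_left sc_mult_right sc_minus)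
      then show ?thesis using g relI scI by simp
    next
      case a4
      then have "theta_free w g = sc (inverse w) g"
        by (simp add: theta_minus mc theta_mult theta_word wts theta_poly sc_mult_left sc_mult_right sc_minus)
      then show ?thesis using g relI scI by simp
    qed
    then show "g \<in> ?J" using gc by simp
  qed
  have "genideal free_alg (gwa_rels a h0) \<subseteq> ?J" by (rule I.genideal_minimal[OF J rels])
  then have "gwa_ideal a h0 \<subseteq> ?J" by (simp only: gwa_ideal_def)
  then show ?thesis using f by blast
qed

definition wtz :: "'k::field \<Rightarrow> nat \<times> int \<Rightarrow> 'k" where
  "wtz w z = (if snd z \<ge> 0 then w ^ nat (snd z) else inverse w ^ nat (- snd z))"

lemma wt_bw: "wt w (bw z) = wtz w z"
proof -
  obtain i n where z: "z = (i,n)" by fastforce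
  show ?thesis using count_bw[of i n] by (simp add: z wt_def wtz_def)
qed

lemma theta_nfK: "theta_free w (nfK K) = nfK (\<lambda>z. wtz w z * K z)"
proof
  fix u
  show "theta_free w (nfK K) u = nfK (\<lambda>z. wtz w z * K z) u"
  proof (cases "u \<in> range bw")
    case True
    then obtain z where "u = bw z" by auto
    then show ?thesis by (simp add: theta_wt wt_bw)
  next
    case False
    then show ?thesis by (simp add: theta_wt nfK_def)
  qed
qed

lemma prim_root_nz: "prim_root r w \<Longrightarrow> r \<ge> 1 \<Longrightarrow> w \<noteq> 0"
  unfolding prim_root_def by (metis power_0_left not_one_le_zero zero_neq_one le_zero_eq)

lemma prim_root_pow: "prim_root r w \<Longrightarrow> r \<ge> 1 \<Longrightarrow> w ^ n = 1 \<longleftrightarrow> r dvd n"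
proof
  assume p: "prim_root r w" and r: "r \<ge> 1"
  assume "w ^ n = 1"
  moreover have "w ^ n = (w ^ r) ^ (n div r) * w ^ (n mod r)"
    by (simp add: power_mult[symmetric] power_add[symmetric])
  ultimately have "w ^ (n mod r) = 1" using p by (simp add: prim_root_def)
  moreover have "n mod r < r" using r by simp
  ultimately have "n mod r = 0" using p unfolding prim_root_def by (metis neq0_conv)
  then show "r dvd n" by auto
next
  assume p: "prim_root r w" and "r dvd n"
  then obtain k where "n = r * k" by auto
  then show "w ^ n = 1" using p by (simp add: prim_root_def power_mult)
qed

lemma wtz_one:
  assumes p: "prim_root r w" and r: "r \<ge> 1"
  shows "wtz w z = 1 \<longleftrightarrow> int r dvd snd z"
proof (cases "snd z \<ge> 0")
  case True
  have "int r dvd snd z \<longleftrightarrow> r dvd nat (snd z)" using True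
    by (metis int_dvd_int_iff nat_0_le)
  then show ?thesis using True prim_root_pow[OF p r] by (simp add: wtz_def)
next
  case False
  have w: "w \<noteq> 0" using prim_root_nz[OF p r] .
  have "int r dvd snd z \<longleftrightarrow> r dvd nat (- snd z)" using False
    by (metis dvd_minus_iff int_dvd_int_iff nat_0_le neg_0_le_iff_le nle_le)
  moreover have "inverse w ^ m = 1 \<longleftrightarrow> w ^ m = 1" for m
    using w by (metis inverse_1 inverse_inverse_eq power_inverse)
  ultimately show ?thesis using False prim_root_pow[OF p r] by (simp add: wtz_def)
qed

declare fa_simps(1)[simp del]

context gw
begin

lemma carrier_gwa: "carrier (gwa a h0) = a_rcosets\<^bsub>free_alg\<^esub> (gwa_ideal a h0)"
  by (simp add: gwa_def FactRing_def)

lemma rep_cls: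
  assumes "C \<in> carrier (gwa a h0)"
  shows "(SOME g. g \<in> C) \<in> carrier free_alg" "cls (SOME g. g \<in> C) = C"
proof -
  obtain g where g: "g \<in> carrier free_alg" "C = gwa_ideal a h0 +>\<^bsub>free_alg\<^esub> g"
    using assms unfolding carrier_gwa A_RCOSETS_def RCOSETS_def a_r_coset_def by auto
  have "g \<in> C" using g I.a_rcos_self by simp
  then have s: "(SOME g. g \<in> C) \<in> C" by (rule someI[of "\<lambda>g. g \<in> C"])
  then show "(SOME g. g \<in> C) \<in> carrier free_alg"
    using g I.a_rcosets_carrier I.a_rcosetsI[OF I.a_subset] by (metis subsetD)
  then show "cls (SOME g. g \<in> C) = C"
    using s g I.a_repr_independence' unfolding gwa_class_def by metis
qed

lemma cls_carrier: "f \<in> carrier free_alg \<Longrightarrow> cls f \<in> carrier (gwa a h0)"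
  unfolding carrier_gwa gwa_class_def by (rule I.a_rcosetsI[OF I.a_subset])

lemma cls_mult: "f \<in> carrier free_alg \<Longrightarrow> g \<in> carrier free_alg \<Longrightarrow>
  cls f \<otimes>\<^bsub>gwa a h0\<^esub> cls g = cls (f \<otimes>\<^bsub>free_alg\<^esub> g)"
  by (simp add: gwa_def FactRing_def gwa_class_def I.rcoset_mult_add)

lemma cls_add: "f \<in> carrier free_alg \<Longrightarrow> g \<in> carrier free_alg \<Longrightarrow>
  cls f \<oplus>\<^bsub>gwa a h0\<^esub> cls g = cls (f \<oplus>\<^bsub>free_alg\<^esub> g)"
  by (simp add: gwa_def FactRing_def gwa_class_def I.a_rcos_sum)

lemma cls_one: "\<one>\<^bsub>gwa a h0\<^esub> = cls \<one>\<^bsub>free_alg\<^esub>"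
  by (simp add: gwa_def FactRing_def gwa_class_def)

lemma theta_cls:
  assumes w: "w \<noteq> 0" and g: "g \<in> carrier free_alg"
  shows "gwa_theta a h0 w (cls g) = cls (theta_free w g)"
proof -
  let ?g' = "SOME f. f \<in> cls g"
  have g': "?g' \<in> carrier free_alg" "cls ?g' = cls g" using rep_cls[OF cls_carrier[OF g]] by auto
  then have "?g' \<ominus>\<^bsub>free_alg\<^esub> g \<in> gwa_ideal a h0" using cls_eq_iff[OF g'(1) g] by simp
  then have "theta_free w (?g' \<ominus>\<^bsub>free_alg\<^esub> g) \<in> gwa_ideal a h0" by (rule theta_ideal[OF w])
  then have "theta_free w ?g' \<ominus>\<^bsub>free_alg\<^esub> theta_free w g \<in> gwa_ideal a h0"
    by (simp add: theta_minus[OF g'(1) g])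
  then have "cls (theta_free w ?g') = cls (theta_free w g)"
    using cls_eq_iff[OF theta_carrier[OF g'(1)] theta_carrier[OF g]] by simp
  then show ?thesis by (simp add: gwa_theta_def)
qed

end

lemma nfK_diff: "nfK K1 \<ominus>\<^bsub>free_alg\<^esub> nfK K2 = nfK (\<lambda>z. K1 z - K2 z)"
  if "finite {z. K1 z \<noteq> 0}" "finite {z. K2 z \<noteq> 0}"
  using that by (simp add: fa_a_minus nfK_carrier) (auto simp: nfK_def)

declare fa_simps(1)[simp del]

theorem lemma4p1:
  fixes a :: "'k::field_char_0 poly" and h0 w :: 'k and r :: nat
  assumes "degree a > 0"
    and "h0 \<noteq> 0"
    and "r \<ge> 1"
    and "prim_root r w"
  shows "kalg_iso (gwa_inv_alg a h0 w r) (gwa_scalar a h0)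
           (gwa (\<Prod>i<r. pcompose ((gwa_sigma (- h0) ^^ i) a) [:0, of_nat r:]) h0)
           (gwa_scalar (\<Prod>i<r. pcompose ((gwa_sigma (- h0) ^^ i) a) [:0, of_nat r:]) h0)
         \<noteq> {}"
proof -
  have a0: "a \<noteq> 0" using assms(1) by auto
  have r1: "r \<ge> 1" and p: "prim_root r w" using assms by auto
  have R: "(of_nat r :: 'k) \<noteq> 0" using r1 by simp
  have w0: "w \<noteq> 0" by (rule prim_root_nz[OF p r1])
  define b where "b = atil a h0 r"
  have bdef: "(\<Prod>i<r. pcompose ((gwa_sigma (- h0) ^^ i) a) [:0, of_nat r:]) = b"
    by (simp add: b_def atil_def)
  interpret A: gw a h0 .
  interpret B: gw b h0 .
  let ?F = "carrier (free_alg :: (gwa_letter list \<Rightarrow> 'k) ring)"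
  let ?OA = "OA a h0" and ?OB = "OB a h0 r"
  have eqA: "gwa_class a h0 f = gwa_class a h0 g \<longleftrightarrow> (\<forall>v. act ?OA f v = act ?OA g v)"
    if "f \<in> ?F" "g \<in> ?F" for f g
    by (rule eq_generic[OF lin_OA relsA faithA[OF a0] that])
  have eqB: "gwa_class b h0 f = gwa_class b h0 g \<longleftrightarrow> (\<forall>v. act ?OB f v = act ?OB g v)"
    if "f \<in> ?F" "g \<in> ?F" for f g
    unfolding b_def by (rule eq_generic[OF lin_OB relsB[OF _ R] faithB[OF a0 r1] that])
  define rep where "rep C = (SOME g. g \<in> C)" for C :: "(gwa_letter list \<Rightarrow> 'k) set"
  define phi where "phi C = gwa_class b h0 (SOME f. f \<in> ?F \<and> (\<forall>v. act ?OB f v = act ?OA (rep C) v))"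
    for C :: "(gwa_letter list \<Rightarrow> 'k) set"
  have rep: "rep C \<in> ?F" "A.cls (rep C) = C" if "C \<in> carrier (gwa a h0)" for C
    using A.rep_cls[OF that] unfolding rep_def by auto
  have rep_act: "act ?OA (rep (A.cls g)) v = act ?OA g v" if "g \<in> ?F" for g v
    using rep[OF A.cls_carrier[OF that]] eqA that by blast
  have phi_cls: "phi (A.cls g) = B.cls f"
    if g: "g \<in> ?F" and f: "f \<in> ?F" and fg: "\<forall>v. act ?OB f v = act ?OA g v" for g f
  proof -
    let ?P = "\<lambda>f'. f' \<in> ?F \<and> (\<forall>v. act ?OB f' v = act ?OA (rep (A.cls g)) v)"
    have "?P f" using f fg rep_act[OF g] by simp
    then have s: "?P (SOME f. ?P f)" by (rule someI[of ?P])
    then have "B.cls (SOME f. ?P f) = B.cls f" using eqB[OF _ f] fg rep_act[OF g] by simp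
    then show ?thesis by (simp add: phi_def)
  qed
  have invC: "C \<in> gwa_invariants a h0 w r \<longleftrightarrow> C \<in> carrier (gwa a h0) \<and> (\<forall>j<r. (gwa_theta a h0 w ^^ j) C = C)" for C
    by (simp add: gwa_invariants_def)
  have diffK: "K1 = K2"
    if K1: "finite {z. K1 z \<noteq> 0}" and K2: "finite {z. K2 z \<noteq> 0}"
      and e: "A.cls (nfK K1) = A.cls (nfK K2)" for K1 K2
  proof -
    have c1: "nfK K1 \<in> ?F" and c2: "nfK K2 \<in> ?F" using nfK_carrier K1 K2 by auto
    have fin: "finite {z. K1 z - K2 z \<noteq> 0}"
      by (rule finite_subset[of _ "{z. K1 z \<noteq> 0} \<union> {z. K2 z \<noteq> 0}"]) (use K1 K2 in auto)
    have "act ?OA (nfK (\<lambda>z. K1 z - K2 z)) v0 = (\<lambda>m. 0)"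
      using e eqA[OF c1 c2] act_minus[OF c1 c2, of ?OA v0] nfK_diff[OF K1 K2] by simp
    then have "(\<lambda>z. K1 z - K2 z) = (\<lambda>z. 0)" by (rule faithA[OF a0 fin])
    then show ?thesis by (simp add: fun_eq_iff)
  qed
  have ex1: "\<exists>f\<in>?F. (\<forall>v. act ?OB f v = act ?OA (rep C) v) \<and> phi C = B.cls f"
    if C: "C \<in> gwa_invariants a h0 w r" for C
  proof -
    have Cc: "C \<in> carrier (gwa a h0)" using C invC by blast
    let ?g = "rep C"
    have g: "?g \<in> ?F" "A.cls ?g = C" using rep[OF Cc] by auto
    obtain K where K: "finite {z. K z \<noteq> 0}" "A.cls ?g = A.cls (nfK K)" using A.spanning[OF g(1)] by blast
    have Kc: "nfK K \<in> ?F" using nfK_carrier[OF K(1)] .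
    have dv: "int r dvd snd z" if Kz: "K z \<noteq> 0" for z
    proof (cases "r = 1")
      case True then show ?thesis by simp
    next
      case False
      then have "1 < r" using r1 by simp
      then have "(gwa_theta a h0 w ^^ 1) C = C" using C invC by blast
      then have "gwa_theta a h0 w (A.cls (nfK K)) = A.cls (nfK K)" using g K by simp
      then have e: "A.cls (nfK (\<lambda>z. wtz w z * K z)) = A.cls (nfK K)"
        by (simp add: A.theta_cls[OF w0 Kc] theta_nfK)
      have fin: "finite {z. wtz w z * K z \<noteq> 0}"
        by (rule finite_subset[OF _ K(1)]) auto
      have "(\<lambda>z. wtz w z * K z) = K" by (rule diffK[OF fin K(1) e])
      then have "wtz w z * K z = K z" by (rule fun_cong)
      then have "wtz w z = 1" using Kz by simp
      then show ?thesis using wtz_one[OF p r1] by simp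
    qed
    note cr = corr(1)[OF r1 K(1) dv] corr(2)[OF r1 K(1) dv]
    let ?f = "nfK (trK r K)"
    have fc: "?f \<in> ?F" using nfK_carrier[OF cr(1)] .
    have act: "\<forall>v. act ?OB ?f v = act ?OA ?g v"
      using cr(2) eqA[OF g(1) Kc] K(2) by simp
    have "phi C = B.cls ?f" using phi_cls[OF g(1) fc act] g(2) by simp
    then show ?thesis using fc act by blast
  qed
  have ex2: "\<exists>g\<in>?F. A.cls g \<in> gwa_invariants a h0 w r \<and> (\<forall>v. act ?OA g v = act ?OB f v)"
    if f: "f \<in> ?F" for f
  proof -
    obtain K where K: "finite {z. K z \<noteq> 0}" "B.cls f = B.cls (nfK K)" using B.spanning[OF f] by blast
    have Kc: "nfK K \<in> ?F" using nfK_carrier[OF K(1)] .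
    define KA where "KA z = (if int r dvd snd z then K (fst z, snd z div int r) * inverse (of_nat r) ^ fst z else 0)" for z
    have finA: "finite {z. KA z \<noteq> 0}"
    proof (rule finite_subset)
      show "{z. KA z \<noteq> 0} \<subseteq> (\<lambda>z. (fst z, int r * snd z)) ` {z. K z \<noteq> 0}"
      proof
        fix z assume z: "z \<in> {z. KA z \<noteq> 0}"
        then have d: "int r dvd snd z" and k: "K (fst z, snd z div int r) \<noteq> 0"
          by (auto simp: KA_def split: if_splits)
        have "z = (fst (fst z, snd z div int r), int r * snd (fst z, snd z div int r))" using d by simp
        then show "z \<in> (\<lambda>z. (fst z, int r * snd z)) ` {z. K z \<noteq> 0}" using k by blast
      qed
    qed (use K(1) in simp)
    have dvA: "int r dvd snd z" if "KA z \<noteq> 0" for z using that by (auto simp: KA_def split: if_splits)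
    have tr: "trK r KA = K"
    proof
      fix z :: "nat \<times> int"
      have one: "inverse (of_nat r) ^ fst z * of_nat r ^ fst z = (1::'k)" using R by (simp add: power_mult_distrib[symmetric])
      have dd: "(int r * snd z) div int r = snd z" using r1 by simp
      have "trK r KA z = K (fst z, snd z) * inverse (of_nat r) ^ fst z * of_nat r ^ fst z"
        by (simp add: trK_def KA_def dd)
      also have "\<dots> = K z * (inverse (of_nat r) ^ fst z * of_nat r ^ fst z)" by (simp only: mult.assoc prod.collapse)
      also have "\<dots> = K z" by (simp only: one mult_1_right)
      finally show "trK r KA z = K z" .
    qed
    note cr = corr(1)[OF r1 finA dvA, unfolded tr] corr(2)[OF r1 finA dvA, unfolded tr]
    let ?g = "nfK KA"
    have gc: "?g \<in> ?F" using nfK_carrier[OF finA] .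
    have act: "\<forall>v. act ?OA ?g v = act ?OB f v"
      using cr(2) eqB[OF f Kc] K(2) by simp
    have th: "gwa_theta a h0 w (A.cls ?g) = A.cls ?g"
    proof -
      have "(\<lambda>z. wtz w z * KA z) = KA"
      proof
        fix z show "wtz w z * KA z = KA z"
          using wtz_one[OF p r1, of z] dvA[of z] by (cases "KA z = 0") auto
      qed
      then show ?thesis by (simp add: A.theta_cls[OF w0 gc] theta_nfK)
    qed
    have "(gwa_theta a h0 w ^^ j) (A.cls ?g) = A.cls ?g" for j
      by (induction j) (simp_all add: th)
    then have "A.cls ?g \<in> gwa_invariants a h0 w r"
      using A.cls_carrier[OF gc] invC by blast
    then show ?thesis using gc act by blast
  qed
  have carrR: "carrier (gwa_inv_alg a h0 w r) = gwa_invariants a h0 w r"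
    by (simp add: gwa_inv_alg_def)
  have iso: "phi \<in> ring_iso (gwa_inv_alg a h0 w r) (gwa b h0)"
  proof (rule ring_iso_memI)
    fix x assume "x \<in> carrier (gwa_inv_alg a h0 w r)"
    then obtain f where "f \<in> ?F" "phi x = B.cls f" using ex1 carrR by blast
    then show "phi x \<in> carrier (gwa b h0)" using B.cls_carrier by simp
  next
    fix x y assume x: "x \<in> carrier (gwa_inv_alg a h0 w r)" and y: "y \<in> carrier (gwa_inv_alg a h0 w r)"
    obtain f1 where f1: "f1 \<in> ?F" "\<forall>v. act ?OB f1 v = act ?OA (rep x) v" "phi x = B.cls f1" using ex1 x carrR by blast
    obtain f2 where f2: "f2 \<in> ?F" "\<forall>v. act ?OB f2 v = act ?OA (rep y) v" "phi y = B.cls f2" using ex1 y carrR by blast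
    have xc: "x \<in> carrier (gwa a h0)" and yc: "y \<in> carrier (gwa a h0)" using x y carrR invC by auto
    note gx = rep[OF xc] and gy = rep[OF yc]
    have "x \<otimes>\<^bsub>gwa_inv_alg a h0 w r\<^esub> y = A.cls (rep x) \<otimes>\<^bsub>gwa a h0\<^esub> A.cls (rep y)"
      using gx gy by (simp add: gwa_inv_alg_def)
    also have "\<dots> = A.cls (rep x \<otimes>\<^bsub>free_alg\<^esub> rep y)" by (rule A.cls_mult[OF gx(1) gy(1)])
    finally have m: "x \<otimes>\<^bsub>gwa_inv_alg a h0 w r\<^esub> y = A.cls (rep x \<otimes>\<^bsub>free_alg\<^esub> rep y)" .
    have "\<forall>v. act ?OB (f1 \<otimes>\<^bsub>free_alg\<^esub> f2) v = act ?OA (rep x \<otimes>\<^bsub>free_alg\<^esub> rep y) v"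
      using f1 f2 gx gy by (simp add: act_mult lin_OA lin_OB)
    then have "phi (x \<otimes>\<^bsub>gwa_inv_alg a h0 w r\<^esub> y) = B.cls (f1 \<otimes>\<^bsub>free_alg\<^esub> f2)"
      unfolding m by (rule phi_cls[OF fa_mult_closed[OF gx(1) gy(1)] fa_mult_closed[OF f1(1) f2(1)]])
    then show "phi (x \<otimes>\<^bsub>gwa_inv_alg a h0 w r\<^esub> y) = phi x \<otimes>\<^bsub>gwa b h0\<^esub> phi y"
      using f1 f2 B.cls_mult by simp
    have "x \<oplus>\<^bsub>gwa_inv_alg a h0 w r\<^esub> y = A.cls (rep x) \<oplus>\<^bsub>gwa a h0\<^esub> A.cls (rep y)"
      using gx gy by (simp add: gwa_inv_alg_def)
    also have "\<dots> = A.cls (rep x \<oplus>\<^bsub>free_alg\<^esub> rep y)" by (rule A.cls_add[OF gx(1) gy(1)])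
    finally have ad: "x \<oplus>\<^bsub>gwa_inv_alg a h0 w r\<^esub> y = A.cls (rep x \<oplus>\<^bsub>free_alg\<^esub> rep y)" .
    have "\<forall>v. act ?OB (f1 \<oplus>\<^bsub>free_alg\<^esub> f2) v = act ?OA (rep x \<oplus>\<^bsub>free_alg\<^esub> rep y) v"
      using f1 f2 gx gy by (simp add: act_add del: fa_simps)
    then have "phi (x \<oplus>\<^bsub>gwa_inv_alg a h0 w r\<^esub> y) = B.cls (f1 \<oplus>\<^bsub>free_alg\<^esub> f2)"
      unfolding ad by (rule phi_cls[OF A.I.a_closed[OF gx(1) gy(1)] A.I.a_closed[OF f1(1) f2(1)]])
    then show "phi (x \<oplus>\<^bsub>gwa_inv_alg a h0 w r\<^esub> y) = phi x \<oplus>\<^bsub>gwa b h0\<^esub> phi y"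
      using f1 f2 B.cls_add by simp
  next
    have "\<one>\<^bsub>gwa_inv_alg a h0 w r\<^esub> = A.cls \<one>\<^bsub>free_alg\<^esub>"
      by (simp add: gwa_inv_alg_def A.cls_one)
    moreover have "phi (A.cls \<one>\<^bsub>free_alg\<^esub>) = B.cls \<one>\<^bsub>free_alg\<^esub>"
      by (rule phi_cls) (simp_all add: act_one A.I.one_closed del: fa_simps)
    ultimately show "phi \<one>\<^bsub>gwa_inv_alg a h0 w r\<^esub> = \<one>\<^bsub>gwa b h0\<^esub>" by (simp add: B.cls_one)
  next
    show "bij_betw phi (carrier (gwa_inv_alg a h0 w r)) (carrier (gwa b h0))"
      unfolding bij_betw_def carrR
    proof
      show "inj_on phi (gwa_invariants a h0 w r)"
      proof (rule inj_onI)
        fix x y assume x: "x \<in> gwa_invariants a h0 w r" and y: "y \<in> gwa_invariants a h0 w r"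
          and e: "phi x = phi y"
        obtain f1 where f1: "f1 \<in> ?F" "\<forall>v. act ?OB f1 v = act ?OA (rep x) v" "phi x = B.cls f1" using ex1 x by blast
        obtain f2 where f2: "f2 \<in> ?F" "\<forall>v. act ?OB f2 v = act ?OA (rep y) v" "phi y = B.cls f2" using ex1 y by blast
        have xc: "x \<in> carrier (gwa a h0)" and yc: "y \<in> carrier (gwa a h0)" using x y invC by auto
        note gx = rep[OF xc] and gy = rep[OF yc]
        have "\<forall>v. act ?OB f1 v = act ?OB f2 v" using e f1 f2 eqB[OF f1(1) f2(1)] by simp
        then have "A.cls (rep x) = A.cls (rep y)" using f1 f2 eqA[OF gx(1) gy(1)] by simp
        then show "x = y" using gx gy by simp
      qed
    next
      show "phi ` gwa_invariants a h0 w r = carrier (gwa b h0)"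
      proof
        show "phi ` gwa_invariants a h0 w r \<subseteq> carrier (gwa b h0)"
        proof
          fix y assume "y \<in> phi ` gwa_invariants a h0 w r"
          then obtain x where x: "x \<in> gwa_invariants a h0 w r" "y = phi x" by blast
          obtain f where "f \<in> ?F" "phi x = B.cls f" using ex1[OF x(1)] by blast
          then show "y \<in> carrier (gwa b h0)" using x B.cls_carrier by simp
        qed
      next
        show "carrier (gwa b h0) \<subseteq> phi ` gwa_invariants a h0 w r"
        proof
          fix D assume D: "D \<in> carrier (gwa b h0)"
          obtain f where f: "f \<in> ?F" "B.cls f = D" using B.rep_cls[OF D] by blast
          obtain g where g: "g \<in> ?F" "A.cls g \<in> gwa_invariants a h0 w r" "\<forall>v. act ?OA g v = act ?OB f v"
            using ex2[OF f(1)] by blast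
          have "phi (A.cls g) = B.cls f" using phi_cls[OF g(1) f(1)] g(3) by simp
          then show "D \<in> phi ` gwa_invariants a h0 w r" using g(2) f(2) by force
        qed
      qed
    qed
  qed
  have sc: "phi (gwa_scalar a h0 c) = gwa_scalar b h0 c" for c
  proof -
    have "\<forall>v. act ?OB (fa_poly [:c:]) v = act ?OA (fa_poly [:c:]) v"
      by (simp add: act_fa_poly[where Op = "OA a h0" and q = "[:0,1:]", OF OA_Lh]
                    act_fa_poly[where Op = "OB a h0 r" and q = "[:0, inverse (of_nat r):]", OF OB_simps(1)])
    then show ?thesis unfolding gwa_scalar_def by (rule phi_cls[OF fa_poly_carrier fa_poly_carrier])
  qed
  have "phi \<in> kalg_iso (gwa_inv_alg a h0 w r) (gwa_scalar a h0) (gwa b h0) (gwa_scalar b h0)"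
    unfolding kalg_iso_def using iso sc by blast
  then show ?thesis unfolding bdef by blast
qed

end
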